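(* Let $k\ge 1$, $a\ge 1$ be integers and $N=2^a$. Then: (i) Every $X\in GL(Nk,\mathbb F_2)$ can be written as $X=PM$, where $P$ is an $Nk\times Nk$ permutation matrix and $M$ is a product of in-block factors and at most $4(N-1)$ transversal layers. (ii) If $X\in GL(Nk,\mathbb F_2)$ is block upper triangular or block lower triangular with respect to the partition of $[Nk]$ into $N$ consecutive blocks of size $k$ (i.e. its $k\times k$ block $X_{ij}$ vanishes for all $i>j$, respectively for all $i<j$), then $X$ itself (with no permutation factor) is a product of in-block factors and at most $2(N-1)$ transversal layers.
   Context: Setting: $N$ codeblocks of a CSS code each encoding $k$ logical qubits. Logical qubit $j\in[k]$ of codeblock $i\in[N]$ is given index $(i-1)k+j$. A logical circuit of CNOT gates on the $Nk$ logical qubits is described by its action on $X$-type logical operators, an invertible matrix in $GL(Nk,\mathbb F_2)$; composition of circuits corresponds to matrix multiplication. An in-block factor is a block-diagonal matrix $\mathrm{diag}(C_1,\dots,C_N)$ with each $C_i\in GL(k,\mathbb F_2)$ (for phantom codes these are realized by relabelling qubits, at zero physical cost). Let $E^{(N)}_{ij}\in\mathbb F_2^{N\times N}$ denote the matrix unit with a single $1$ in position $(i,j)$. A transversal layer is a matrix $I_{Nk}+\sum_{t=1}^{s}E^{(N)}_{i_tj_t}\otimes I_k$, where $(i_1,j_1),\dots,(i_s,j_s)$ are ordered pairs of codeblock indices and the $2s$ indices $i_1,j_1,\dots,i_s,j_s$ are pairwise distinct (a physical depth-one layer of transversal CNOTs between disjoint pairs of codeblocks). *)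

theory Defs
  imports "HOL-Library.Z2" "Jordan_Normal_Form.Matrix" "HOL-Combinatorics.Permutations"
begin

(* Indices are 0-based: codeblock i (0 <= i < N) owns the logical indices
   i*k, ..., i*k+k-1, i.e. index r lies in codeblock r div k. *)

definition GL2 :: "nat \<Rightarrow> bit mat set" where
  "GL2 n = {X. X \<in> carrier_mat n n \<and> invertible_mat X}"

definition perm_matrix :: "nat \<Rightarrow> bit mat \<Rightarrow> bool" where
  "perm_matrix n P \<longleftrightarrow> (\<exists>\<sigma>. \<sigma> permutes {..<n} \<and>
      P = mat n n (\<lambda>(r, c). if \<sigma> r = c then 1 else 0))"

definition diag_block :: "nat \<Rightarrow> nat \<Rightarrow> bit mat \<Rightarrow> bit mat" where
  "diag_block k i D = mat k k (\<lambda>(r, c). D $$ (i * k + r, i * k + c))"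

definition in_block_factor :: "nat \<Rightarrow> nat \<Rightarrow> bit mat \<Rightarrow> bool" where
  "in_block_factor N k D \<longleftrightarrow> D \<in> carrier_mat (N * k) (N * k) \<and>
     (\<forall>r < N * k. \<forall>c < N * k. r div k \<noteq> c div k \<longrightarrow> D $$ (r, c) = 0) \<and>
     (\<forall>i < N. invertible_mat (diag_block k i D))"

definition disjoint_pairs :: "nat \<Rightarrow> (nat \<times> nat) set \<Rightarrow> bool" where
  "disjoint_pairs N S \<longleftrightarrow> S \<subseteq> {..<N} \<times> {..<N} \<and>
     (\<forall>(i, j) \<in> S. i \<noteq> j) \<and>
     (\<forall>(i, j) \<in> S. \<forall>(i', j') \<in> S. (i, j) \<noteq> (i', j') \<longrightarrow>
        i \<noteq> i' \<and> i \<noteq> j' \<and> j \<noteq> i' \<and> j \<noteq> j')"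

(* I_{Nk} + sum_{(i,j) in S} E^{(N)}_{ij} \<otimes> I_k, written out entrywise *)
definition layer_matrix :: "nat \<Rightarrow> nat \<Rightarrow> (nat \<times> nat) set \<Rightarrow> bit mat" where
  "layer_matrix N k S = mat (N * k) (N * k) (\<lambda>(r, c).
      (if r = c then 1 else 0) +
      (if (r div k, c div k) \<in> S \<and> r mod k = c mod k then 1 else 0))"

definition transversal_layer :: "nat \<Rightarrow> nat \<Rightarrow> bit mat \<Rightarrow> bool" where
  "transversal_layer N k L \<longleftrightarrow> (\<exists>S. disjoint_pairs N S \<and> L = layer_matrix N k S)"

definition layered_product :: "nat \<Rightarrow> nat \<Rightarrow> nat \<Rightarrow> bit mat \<Rightarrow> bool" where
  "layered_product N k m M \<longleftrightarrow> (\<exists>fs :: (bool \<times> bit mat) list.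
      M = foldr (\<lambda>f A. snd f * A) fs (1\<^sub>m (N * k)) \<and>
      (\<forall>f \<in> set fs. if fst f then transversal_layer N k (snd f)
                                 else in_block_factor N k (snd f)) \<and>
      length (filter fst fs) \<le> m)"

definition block_upper_triangular :: "nat \<Rightarrow> nat \<Rightarrow> bit mat \<Rightarrow> bool" where
  "block_upper_triangular N k X \<longleftrightarrow>
     (\<forall>r < N * k. \<forall>c < N * k. r div k > c div k \<longrightarrow> X $$ (r, c) = 0)"

definition block_lower_triangular :: "nat \<Rightarrow> nat \<Rightarrow> bit mat \<Rightarrow> bool" where
  "block_lower_triangular N k X \<longleftrightarrow>
     (\<forall>r < N * k. \<forall>c < N * k. r div k < c div k \<longrightarrow> X $$ (r, c) = 0)"

end

theory Submission
  imports Defs "Jordan_Normal_Form.Determinant"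
begin


lemma bit_add_self[simp]: "(x::bit) + x = 0"
  by (cases x) auto

lemma inv_det:
  assumes A: "(A::bit mat) \<in> carrier_mat n n"
  shows "invertible_mat A \<longleftrightarrow> det A \<noteq> 0"
proof
  assume "invertible_mat A"
  then obtain B where AB: "A * B = 1\<^sub>m n" and BA: "B * A = 1\<^sub>m (dim_row B)"
    using A unfolding invertible_mat_def inverts_mat_def by auto
  have "dim_col B = n" using AB by (metis index_mult_mat(3) index_one_mat(3))
  moreover have "dim_row B = n" using BA A by (metis index_mult_mat(3) index_one_mat(3) carrier_matD(2))
  ultimately have B: "B \<in> carrier_mat n n" by auto
  have "det A * det B = 1" using det_mult[OF A B] AB by simp
  then show "det A \<noteq> 0" by auto
next
  assume "det A \<noteq> 0"
  from det_non_zero_imp_unit[OF A this, of "()"]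
  obtain B where B: "B \<in> carrier_mat n n" and "B * A = 1\<^sub>m n" "A * B = 1\<^sub>m n"
    unfolding Units_def ring_mat_def by auto
  then show "invertible_mat A" using A unfolding invertible_mat_def inverts_mat_def square_mat.simps
    by (intro conjI exI[of _ B]) auto
qed

lemma inv_kernel:
  assumes A: "(A::bit mat) \<in> carrier_mat n n"
    and K: "\<And>v. v \<in> carrier_vec n \<Longrightarrow> A *\<^sub>v v = 0\<^sub>v n \<Longrightarrow> v = 0\<^sub>v n"
  shows "invertible_mat A"
  using inv_det[OF A] det_0_iff_vec_prod_zero_field[OF A] K by blast

lemma inv_mult:
  assumes A: "(A::bit mat) \<in> carrier_mat n n" and B: "B \<in> carrier_mat n n"
    and "invertible_mat A" "invertible_mat B"
  shows "invertible_mat (A * B)"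
  using assms inv_det[OF A] inv_det[OF B] inv_det[of "A*B" n] det_mult[OF A B] by auto

lemma inv_transpose:
  assumes A: "(A::bit mat) \<in> carrier_mat n n" and "invertible_mat A"
  shows "invertible_mat (transpose_mat A)"
  using assms inv_det[OF A] inv_det[of "transpose_mat A" n] det_transpose[OF A] by auto

lemma inv_one: "invertible_mat (1\<^sub>m n :: bit mat)"
  using inv_det[of "1\<^sub>m n" n] by simp

lemma mult_vec_index:
  assumes "A \<in> carrier_mat n n" "v \<in> carrier_vec n" "i < n"
  shows "(A *\<^sub>v v) $ i = (\<Sum>j<n. A $$ (i, j) * v $ j)"
  using assms by (auto simp: mult_mat_vec_def scalar_prod_def lessThan_atLeast0 intro!: sum.cong)

lemma mult_index:
  assumes "A \<in> carrier_mat n m" "B \<in> carrier_mat m p" "i < n" "j < p"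
  shows "(A * B) $$ (i, j) = (\<Sum>s<m. A $$ (i, s) * B $$ (s, j))"
  using assms by (auto simp: scalar_prod_def lessThan_atLeast0 intro!: sum.cong)

lemma blk_sum:
  fixes f :: "nat \<Rightarrow> 'a::comm_monoid_add"
  assumes k: "k > 0" and i: "i < N"
    and Z: "\<And>s. s < N * k \<Longrightarrow> s div k \<noteq> i \<Longrightarrow> f s = 0"
  shows "(\<Sum>s<N*k. f s) = (\<Sum>s<k. f (i*k + s))"
proof -
  have sub: "(\<lambda>s. i*k+s) ` {..<k} \<subseteq> {..<N*k}"
  proof
    fix x assume "x \<in> (\<lambda>s. i*k+s) ` {..<k}"
    then obtain s where "s < k" "x = i*k+s" by auto
    moreover have "i*k + k \<le> N*k" using i by (metis Suc_leI mult_Suc mult_le_mono1 add.commute)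
    ultimately show "x \<in> {..<N*k}" by auto
  qed
  have "(\<Sum>s<N*k. f s) = (\<Sum>s\<in>(\<lambda>s. i*k+s) ` {..<k}. f s)"
  proof (rule sum.mono_neutral_right[OF _ sub])
    show "\<forall>x\<in>{..<N*k} - (\<lambda>s. i*k+s) ` {..<k}. f x = 0"
    proof
      fix x assume x: "x \<in> {..<N*k} - (\<lambda>s. i*k+s) ` {..<k}"
      have "x div k \<noteq> i"
      proof
        assume "x div k = i"
        then have "x = i*k + x mod k" by (metis div_mult_mod_eq)
        moreover have "x mod k < k" using k by simp
        ultimately show False using x by blast
      qed
      then show "f x = 0" using Z x by auto
    qed
  qed auto
  also have "\<dots> = (\<Sum>s<k. f (i*k + s))"
    by (subst sum.reindex) (auto simp: inj_on_def)
  finally show ?thesis .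
qed

lemma divk_add[simp]: "(k::nat) > 0 \<Longrightarrow> (i*k + s) div k = i + s div k"
  by (simp add: add.commute)
lemma modk_add[simp]: "(k::nat) > 0 \<Longrightarrow> (i*k + s) mod k = s mod k"
  by (simp add: add.commute)


definition bd :: "nat \<Rightarrow> nat \<Rightarrow> (nat \<Rightarrow> bit mat) \<Rightarrow> bit mat" where
  "bd N k G = mat (N*k) (N*k) (\<lambda>(r,c). if r div k = c div k then G (r div k) $$ (r mod k, c mod k) else 0)"

lemma bd_carrier[simp]: "bd N k G \<in> carrier_mat (N*k) (N*k)"
  by (simp add: bd_def)

lemma bd_index: "r < N*k \<Longrightarrow> c < N*k \<Longrightarrow> bd N k G $$ (r,c) =
   (if r div k = c div k then G (r div k) $$ (r mod k, c mod k) else 0)"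
  by (simp add: bd_def)

lemma div_lt: "r < N*k \<Longrightarrow> r div k < (N::nat)"
  by (simp add: less_mult_imp_div_less)

lemma bd_mult_left:
  assumes k: "k > 0" and M: "M \<in> carrier_mat (N*k) p" and r: "r < N*k" and c: "c < p"
  shows "(bd N k G * M) $$ (r,c) = (\<Sum>s<k. G (r div k) $$ (r mod k, s) * M $$ ((r div k)*k + s, c))"
proof -
  have "(bd N k G * M) $$ (r,c) = (\<Sum>s<N*k. bd N k G $$ (r,s) * M $$ (s,c))"
    by (rule mult_index[OF bd_carrier M r c])
  also have "\<dots> = (\<Sum>s<k. bd N k G $$ (r,(r div k)*k + s) * M $$ ((r div k)*k + s,c))"
    by (rule blk_sum[OF k div_lt[OF r]]) (auto simp: bd_index r)
  also have "\<dots> = (\<Sum>s<k. G (r div k) $$ (r mod k, s) * M $$ ((r div k)*k + s, c))"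
  proof (rule sum.cong[OF refl])
    fix s assume s: "s \<in> {..<k}"
    have "(r div k)*k + s < N*k"
    proof -
      have "r div k + 1 \<le> N" using div_lt[OF r] by simp
      then have "(r div k + 1) * k \<le> N * k" by (rule mult_le_mono1)
      then show ?thesis using s by (simp add: algebra_simps)
    qed
    then show "bd N k G $$ (r,(r div k)*k + s) * M $$ ((r div k)*k + s,c)
      = G (r div k) $$ (r mod k, s) * M $$ ((r div k)*k + s, c)"
      using s k r by (simp add: bd_index)
  qed
  finally show ?thesis .
qed

lemma bd_mult:
  assumes k: "k > 0" and G1: "\<And>i. i < N \<Longrightarrow> G1 i \<in> carrier_mat k k"
    and G2: "\<And>i. i < N \<Longrightarrow> G2 i \<in> carrier_mat k k"
  shows "bd N k G1 * bd N k G2 = bd N k (\<lambda>i. G1 i * G2 i)"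
proof (rule eq_matI)
  fix r c assume r: "r < dim_row (bd N k (\<lambda>i. G1 i * G2 i))" and c: "c < dim_col (bd N k (\<lambda>i. G1 i * G2 i))"
  then have r: "r < N*k" and c: "c < N*k" by (auto simp: bd_def)
  have rk: "r div k < N" using div_lt[OF r] .
  have ck: "c div k < N" using div_lt[OF c] .
  have "(bd N k G1 * bd N k G2) $$ (r,c) = (\<Sum>s<k. G1 (r div k) $$ (r mod k, s) * bd N k G2 $$ ((r div k)*k + s, c))"
    by (rule bd_mult_left[OF k bd_carrier r c])
  also have "\<dots> = (\<Sum>s<k. G1 (r div k) $$ (r mod k, s) * (if r div k = c div k then G2 (r div k) $$ (s, c mod k) else 0))"
  proof (rule sum.cong[OF refl])
    fix s assume s: "s \<in> {..<k}"
    have "(r div k)*k + s < N*k"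
    proof -
      have "r div k + 1 \<le> N" using rk by simp
      then have "(r div k + 1) * k \<le> N * k" by (rule mult_le_mono1)
      then show ?thesis using s by (simp add: algebra_simps)
    qed
    then show "G1 (r div k) $$ (r mod k, s) * bd N k G2 $$ ((r div k)*k + s, c) =
      G1 (r div k) $$ (r mod k, s) * (if r div k = c div k then G2 (r div k) $$ (s, c mod k) else 0)"
      using s k c by (simp add: bd_index)
  qed
  also have "\<dots> = bd N k (\<lambda>i. G1 i * G2 i) $$ (r,c)"
  proof (cases "r div k = c div k")
    case True
    have mm: "r mod k < k" "c mod k < k" using k by auto
    have "(\<Sum>s<k. G1 (r div k) $$ (r mod k, s) * (if r div k = c div k then G2 (r div k) $$ (s, c mod k) else 0))
       = (\<Sum>s<k. G1 (r div k) $$ (r mod k, s) * G2 (r div k) $$ (s, c mod k))"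
      by (rule sum.cong) (simp_all add: True)
    also have "\<dots> = (G1 (r div k) * G2 (r div k)) $$ (r mod k, c mod k)"
      by (rule mult_index[OF G1[OF rk] G2[OF rk] mm, symmetric])
    also have "\<dots> = bd N k (\<lambda>i. G1 i * G2 i) $$ (r,c)"
      using r c True by (simp add: bd_index)
    finally show ?thesis .
  next
    case False
    then show ?thesis using r c by (simp add: bd_index)
  qed
  finally show "(bd N k G1 * bd N k G2) $$ (r,c) = bd N k (\<lambda>i. G1 i * G2 i) $$ (r,c)" .
qed (auto simp: bd_def)

lemma diag_block_bd:
  assumes k: "k > 0" and i: "i < N" and G: "G i \<in> carrier_mat k k"
  shows "diag_block k i (bd N k G) = G i"
proof (rule eq_matI)
  fix r c assume "r < dim_row (G i)" "c < dim_col (G i)"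
  then have r: "r < k" and c: "c < k" using G by auto
  have "i*k + r < N*k" "i*k+c < N*k"
  proof -
    have "(i + 1) * k \<le> N * k" using i by (intro mult_le_mono1) simp
    then show "i*k + r < N*k" "i*k+c < N*k" using r c by (simp_all add: algebra_simps)
  qed
  then show "diag_block k i (bd N k G) $$ (r, c) = G i $$ (r, c)"
    using r c k by (simp add: diag_block_def bd_index)
qed (use G in \<open>auto simp: diag_block_def\<close>)

lemma bd_in_block:
  assumes k: "k > 0" and G: "\<And>i. i < N \<Longrightarrow> G i \<in> carrier_mat k k \<and> invertible_mat (G i)"
  shows "in_block_factor N k (bd N k G)"
  unfolding in_block_factor_def using diag_block_bd[OF k] G by (auto simp: bd_index)

lemma diag_block_carrier[simp]: "diag_block k i D \<in> carrier_mat k k"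
  by (simp add: diag_block_def)

lemma in_block_bd:
  assumes k: "k > 0" and D: "in_block_factor N k D"
  shows "D = bd N k (\<lambda>i. diag_block k i D)"
proof (rule eq_matI)
  have Dc: "D \<in> carrier_mat (N*k) (N*k)" using D unfolding in_block_factor_def by auto
  fix r c assume "r < dim_row (bd N k (\<lambda>i. diag_block k i D))" "c < dim_col (bd N k (\<lambda>i. diag_block k i D))"
  then have r: "r < N*k" and c: "c < N*k" by (auto simp: bd_def)
  show "D $$ (r,c) = bd N k (\<lambda>i. diag_block k i D) $$ (r,c)"
  proof (cases "r div k = c div k")
    case True
    have "r mod k < k" "c mod k < k" using k by auto
    moreover have "r div k * k + r mod k = r" "r div k * k + c mod k = c" using True
      by (metis div_mult_mod_eq)+
    ultimately show ?thesis using True r c by (simp add: bd_index diag_block_def)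
  next
    case False
    then show ?thesis using D r c unfolding in_block_factor_def by (simp add: bd_index)
  qed
qed (use D in \<open>auto simp: in_block_factor_def bd_def\<close>)

lemma in_block_props:
  assumes "in_block_factor N k D" "i < N"
  shows "diag_block k i D \<in> carrier_mat k k" "invertible_mat (diag_block k i D)"
  using assms unfolding in_block_factor_def by auto

lemma in_block_mult:
  assumes k: "k > 0" and A: "in_block_factor N k A" and B: "in_block_factor N k B"
  shows "in_block_factor N k (A * B)"
proof -
  have "A * B = bd N k (\<lambda>i. diag_block k i A) * bd N k (\<lambda>i. diag_block k i B)"
    using in_block_bd[OF k A] in_block_bd[OF k B] by simp
  also have "\<dots> = bd N k (\<lambda>i. diag_block k i A * diag_block k i B)"
    by (rule bd_mult[OF k]) auto
  finally have e: "A * B = bd N k (\<lambda>i. diag_block k i A * diag_block k i B)" .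
  show ?thesis unfolding e
    by (rule bd_in_block[OF k]) (use in_block_props[OF A] in_block_props[OF B] in \<open>auto intro!: inv_mult[of _ k] mult_carrier_mat[of _ k k _ k]\<close>)
qed

lemma bd_one: assumes k: "k > 0" shows "bd N k (\<lambda>_. 1\<^sub>m k) = 1\<^sub>m (N*k)"
proof (rule eq_matI)
  fix r c assume "r < dim_row (1\<^sub>m (N * k) :: bit mat)" "c < dim_col (1\<^sub>m (N * k) :: bit mat)"
  then have r: "r < N*k" and c: "c < N*k" by auto
  have "r = c \<longleftrightarrow> (r div k = c div k \<and> r mod k = c mod k)"
    by (metis div_mult_mod_eq)
  then show "bd N k (\<lambda>_. 1\<^sub>m k) $$ (r, c) = 1\<^sub>m (N * k) $$ (r, c)"
    using r c k by (auto simp: bd_index)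
qed (auto simp: bd_def)

lemma in_block_one: assumes k: "k > 0" shows "in_block_factor N k (1\<^sub>m (N*k))"
  using bd_in_block[OF k, of N "\<lambda>_. 1\<^sub>m k"] bd_one[OF k] inv_one by auto

lemma in_block_carrier: "in_block_factor N k D \<Longrightarrow> D \<in> carrier_mat (N*k) (N*k)"
  by (simp add: in_block_factor_def)

lemma layer_carrier: "transversal_layer N k L \<Longrightarrow> L \<in> carrier_mat (N*k) (N*k)"
  by (auto simp: transversal_layer_def layer_matrix_def)

lemma layer_empty: "layer_matrix N k {} = 1\<^sub>m (N*k)"
  by (rule eq_matI) (auto simp: layer_matrix_def)

lemma transversal_one: "transversal_layer N k (1\<^sub>m (N*k))"
  unfolding transversal_layer_def using layer_empty[of N k]
  by (intro exI[of _ "{}"]) (auto simp: disjoint_pairs_def)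

definition okf :: "nat \<Rightarrow> nat \<Rightarrow> (bool \<times> bit mat) list \<Rightarrow> bool" where
  "okf N k fs \<longleftrightarrow> (\<forall>f \<in> set fs. if fst f then transversal_layer N k (snd f)
                                 else in_block_factor N k (snd f))"

abbreviation fpr :: "nat \<Rightarrow> (bool \<times> bit mat) list \<Rightarrow> bit mat" where
  "fpr n fs \<equiv> foldr (\<lambda>f A. snd f * A) fs (1\<^sub>m n)"

lemma okf_carrier: "okf N k fs \<Longrightarrow> f \<in> set fs \<Longrightarrow> snd f \<in> carrier_mat (N*k) (N*k)"
  unfolding okf_def by (metis in_block_carrier layer_carrier)

lemma fpr_carrier: "okf N k fs \<Longrightarrow> fpr (N*k) fs \<in> carrier_mat (N*k) (N*k)"
proof (induction fs)
  case (Cons f fs)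
  then have "okf N k fs" by (simp add: okf_def)
  then show ?case using Cons okf_carrier[OF Cons.prems, of f] by auto
qed simp

lemma fpr_append: "okf N k fs \<Longrightarrow> okf N k gs \<Longrightarrow> fpr (N*k) (fs @ gs) = fpr (N*k) fs * fpr (N*k) gs"
proof (induction fs)
  case Nil
  then show ?case using fpr_carrier[OF Nil(2)] by simp
next
  case (Cons f fs)
  then have o: "okf N k fs" by (simp add: okf_def)
  have "fpr (N*k) ((f # fs) @ gs) = snd f * (fpr (N*k) fs * fpr (N*k) gs)" using Cons o by simp
  also have "\<dots> = snd f * fpr (N*k) fs * fpr (N*k) gs"
    using assoc_mult_mat[OF okf_carrier[OF Cons(2), of f] fpr_carrier[OF o] fpr_carrier[OF Cons(3)]] by simp
  finally show ?case by simp
qed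

lemma lp_def2: "layered_product N k m M \<longleftrightarrow> (\<exists>fs. M = fpr (N*k) fs \<and> okf N k fs \<and> length (filter fst fs) \<le> m)"
  unfolding layered_product_def okf_def by simp

lemma lp_carrier: "layered_product N k m M \<Longrightarrow> M \<in> carrier_mat (N*k) (N*k)"
  unfolding lp_def2 using fpr_carrier by blast

lemma lp_mult:
  assumes "layered_product N k m A" "layered_product N k m' B"
  shows "layered_product N k (m + m') (A * B)"
proof -
  obtain fs where fs: "A = fpr (N*k) fs" "okf N k fs" "length (filter fst fs) \<le> m" using assms(1) unfolding lp_def2 by blast
  obtain gs where gs: "B = fpr (N*k) gs" "okf N k gs" "length (filter fst gs) \<le> m'" using assms(2) unfolding lp_def2 by blast
  show ?thesis unfolding lp_def2
    by (intro exI[of _ "fs @ gs"]) (use fs gs fpr_append in \<open>auto simp: okf_def\<close>)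
qed

lemma lp_mono: "layered_product N k m A \<Longrightarrow> m \<le> m' \<Longrightarrow> layered_product N k m' A"
  unfolding layered_product_def using le_trans by blast

lemma lp_in_block: "in_block_factor N k D \<Longrightarrow> layered_product N k 0 D"
  unfolding lp_def2 okf_def using in_block_carrier[of N k D]
  by (intro exI[of _ "[(False, D)]"]) auto

lemma lp_layer: "transversal_layer N k L \<Longrightarrow> layered_product N k 1 L"
  unfolding lp_def2 okf_def using layer_carrier[of N k L]
  by (intro exI[of _ "[(True, L)]"]) auto


fun prodLD :: "nat \<Rightarrow> (bit mat \<times> bit mat) list \<Rightarrow> bit mat" where
  "prodLD n [] = 1\<^sub>m n"
| "prodLD n ((L,D)#ps) = L * D * prodLD n ps"

definition okp :: "nat \<Rightarrow> nat \<Rightarrow> (bit mat \<times> bit mat) list \<Rightarrow> bool" where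
  "okp N k ps \<longleftrightarrow> (\<forall>(L,D)\<in>set ps. transversal_layer N k L \<and> in_block_factor N k D)"

definition nf :: "nat \<Rightarrow> nat \<Rightarrow> nat \<Rightarrow> bit mat \<Rightarrow> bool" where
  "nf N k m M \<longleftrightarrow> (\<exists>D0 ps. in_block_factor N k D0 \<and> length ps = m \<and> okp N k ps \<and> M = D0 * prodLD (N*k) ps)"

lemma prodLD_carrier: "okp N k ps \<Longrightarrow> prodLD (N*k) ps \<in> carrier_mat (N*k) (N*k)"
proof (induction ps)
  case (Cons p ps)
  obtain L D where p: "p = (L,D)" by fastforce
  have "okp N k ps" using Cons(2) by (simp add: okp_def)
  moreover have "L \<in> carrier_mat (N*k) (N*k)" "D \<in> carrier_mat (N*k) (N*k)"
    using Cons(2) p layer_carrier in_block_carrier by (auto simp: okp_def)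
  ultimately show ?case using Cons p by auto
qed simp

lemma okf_nf:
  assumes k: "k > 0"
  shows "okf N k fs \<Longrightarrow> nf N k (length (filter fst fs)) (fpr (N*k) fs)"
proof (induction fs)
  case Nil
  show ?case unfolding nf_def okp_def
    by (intro exI[of _ "1\<^sub>m (N*k)"] exI[of _ "[]"]) (simp add: in_block_one[OF k])
next
  case (Cons f fs)
  have o: "okf N k fs" using Cons(2) by (simp add: okf_def)
  obtain D0 ps where D0: "in_block_factor N k D0" "length ps = length (filter fst fs)" "okp N k ps"
    and e: "fpr (N*k) fs = D0 * prodLD (N*k) ps"
    using Cons(1)[OF o] unfolding nf_def by blast
  have D0c: "D0 \<in> carrier_mat (N*k) (N*k)" using in_block_carrier[OF D0(1)] .
  have Pc: "prodLD (N*k) ps \<in> carrier_mat (N*k) (N*k)" using prodLD_carrier[OF D0(3)] .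
  have fc: "snd f \<in> carrier_mat (N*k) (N*k)" using okf_carrier[OF Cons(2)] by simp
  show ?case
  proof (cases "fst f")
    case True
    have L: "transversal_layer N k (snd f)" using Cons(2) True by (simp add: okf_def)
    show ?thesis unfolding nf_def
    proof (intro exI[of _ "1\<^sub>m (N*k)"] exI[of _ "(snd f, D0) # ps"] conjI)
      show "okp N k ((snd f, D0) # ps)" using L D0 by (simp add: okp_def)
      have "fpr (N*k) (f # fs) = snd f * (D0 * prodLD (N*k) ps)" using e by simp
      also have "\<dots> = 1\<^sub>m (N*k) * prodLD (N*k) ((snd f, D0) # ps)"
        using assoc_mult_mat[OF fc D0c Pc] fc D0c Pc by simp
      finally show "fpr (N*k) (f # fs) = 1\<^sub>m (N*k) * prodLD (N*k) ((snd f, D0) # ps)" .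
    qed (use True D0 in_block_one[OF k] in auto)
  next
    case False
    have D: "in_block_factor N k (snd f)" using Cons(2) False by (simp add: okf_def)
    show ?thesis unfolding nf_def
    proof (intro exI[of _ "snd f * D0"] exI[of _ ps] conjI)
      show "fpr (N*k) (f # fs) = snd f * D0 * prodLD (N*k) ps"
        using e assoc_mult_mat[OF fc D0c Pc] by simp
    qed (use False D0 in_block_mult[OF k D D0(1)] in auto)
  qed
qed

lemma nf_Suc:
  assumes k: "k > 0" and "nf N k m M" shows "nf N k (Suc m) M"
proof -
  obtain D0 ps where D0: "in_block_factor N k D0" "length ps = m" "okp N k ps"
    and e: "M = D0 * prodLD (N*k) ps" using assms unfolding nf_def by blast
  have Pc: "prodLD (N*k) ps \<in> carrier_mat (N*k) (N*k)" using prodLD_carrier[OF D0(3)] .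
  show ?thesis unfolding nf_def
    by (intro exI[of _ D0] exI[of _ "(1\<^sub>m (N*k), 1\<^sub>m (N*k)) # ps"])
      (use D0 e Pc transversal_one in_block_one[OF k] in \<open>auto simp: okp_def\<close>)
qed

lemma nf_mono:
  assumes k: "k > 0" and "nf N k m M" "m \<le> m'" shows "nf N k m' M"
  using assms(3,2)
proof (induction m' )
  case 0 then show ?case by simp
next
  case (Suc m')
  show ?case
  proof (cases "m \<le> m'")
    case True
    then show ?thesis using Suc nf_Suc[OF k] by blast
  next
    case False
    then have "m = Suc m'" using Suc(2) by simp
    then show ?thesis using Suc(3) by simp
  qed
qed

lemma lp_nf:
  assumes k: "k > 0" and "layered_product N k m M" shows "nf N k m M"
proof -
  obtain fs where "M = fpr (N*k) fs" "okf N k fs" "length (filter fst fs) \<le> m"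
    using assms unfolding lp_def2 by blast
  then show ?thesis using okf_nf[OF k] nf_mono[OF k] by blast
qed

definition flatp :: "(bit mat \<times> bit mat) list \<Rightarrow> (bool \<times> bit mat) list" where
  "flatp ps = concat (map (\<lambda>(L,D). [(True,L),(False,D)]) ps)"

lemma flatp_okf: "okp N k ps \<Longrightarrow> okf N k (flatp ps)"
  by (induction ps) (auto simp: flatp_def okf_def okp_def)

lemma flatp_len: "length (filter fst (flatp ps)) = length ps"
  by (induction ps) (auto simp: flatp_def)

lemma flatp_prod: "okp N k ps \<Longrightarrow> fpr (N*k) (flatp ps) = prodLD (N*k) ps"
proof (induction ps)
  case (Cons p ps)
  obtain L D where p: "p = (L,D)" by fastforce
  have o: "okp N k ps" using Cons(2) by (simp add: okp_def)
  have Lc: "L \<in> carrier_mat (N*k) (N*k)" "D \<in> carrier_mat (N*k) (N*k)"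
    using Cons(2) p layer_carrier in_block_carrier by (auto simp: okp_def)
  have "fpr (N*k) (flatp (p # ps)) = L * (D * prodLD (N*k) ps)"
    using Cons.IH[OF o] p by (simp add: flatp_def)
  also have "\<dots> = prodLD (N*k) (p # ps)"
    using assoc_mult_mat[OF Lc prodLD_carrier[OF o]] p by simp
  finally show ?case .
qed (simp add: flatp_def)

lemmas flatp_props = flatp_okf flatp_len flatp_prod

lemma nf_lp:
  assumes "nf N k m M" shows "layered_product N k m M"
proof -
  obtain D0 ps where D0: "in_block_factor N k D0" "length ps = m" "okp N k ps"
    and e: "M = D0 * prodLD (N*k) ps" using assms unfolding nf_def by blast
  show ?thesis unfolding lp_def2
    by (intro exI[of _ "(False, D0) # flatp ps"]) (use flatp_okf[OF D0(3)] flatp_len[of ps] flatp_prod[OF D0(3)] D0 e in \<open>auto simp: okf_def\<close>)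
qed


definition diagm :: "nat \<Rightarrow> bit mat \<Rightarrow> bit mat \<Rightarrow> bit mat" where
  "diagm n A D = four_block_mat A (0\<^sub>m n n) (0\<^sub>m n n) D"

lemma dim_bd[simp]: "dim_row (bd N k G) = N*k" "dim_col (bd N k G) = N*k"
  by (auto simp: bd_def)
lemma dim_layer[simp]: "dim_row (layer_matrix N k S) = N*k" "dim_col (layer_matrix N k S) = N*k"
  by (auto simp: layer_matrix_def)

lemma diagm_carrier: "A \<in> carrier_mat n n \<Longrightarrow> D \<in> carrier_mat n n \<Longrightarrow> diagm n A D \<in> carrier_mat (n+n) (n+n)"
  by (simp add: diagm_def)

lemma diagm_mult:
  assumes "A1 \<in> carrier_mat n n" "A2 \<in> carrier_mat n n" "D1 \<in> carrier_mat n n" "D2 \<in> carrier_mat n n"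
  shows "diagm n A1 D1 * diagm n A2 D2 = diagm n (A1 * A2) (D1 * D2)"
  unfolding diagm_def using mult_four_block_mat[OF assms(1) zero_carrier_mat zero_carrier_mat assms(3)
    assms(2) zero_carrier_mat zero_carrier_mat assms(4)] assms by simp

lemma diagm_one: "diagm n (1\<^sub>m n) (1\<^sub>m n) = 1\<^sub>m (n+n)"
  unfolding diagm_def by simp

lemma two_hk: "2*h*k = h*k + (h*k::nat)" by simp

lemma lt_hk: "(k::nat) > 0 \<Longrightarrow> r < h*k \<longleftrightarrow> r div k < h"
  using div_less_iff_less_mult[of k r h] by (simp add: mult.commute)

lemma ge_hk_div: "(k::nat) > 0 \<Longrightarrow> h*k \<le> r \<Longrightarrow> r div k = h + (r - h*k) div k"
  using divk_add[of k h "r - h*k"] by simp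
lemma ge_hk_mod: "(k::nat) > 0 \<Longrightarrow> h*k \<le> r \<Longrightarrow> r mod k = (r - h*k) mod k"
  using modk_add[of k h "r - h*k"] by simp

lemma diagm_bd:
  assumes k: "k > 0"
  shows "diagm (h*k) (bd h k G1) (bd h k G2) = bd (2*h) k (\<lambda>i. if i < h then G1 i else G2 (i - h))"
proof (rule eq_matI)
  fix r c assume "r < dim_row (bd (2*h) k (\<lambda>i. if i < h then G1 i else G2 (i - h)))"
    "c < dim_col (bd (2*h) k (\<lambda>i. if i < h then G1 i else G2 (i - h)))"
  then have r: "r < h*k + h*k" and c: "c < h*k + h*k" by (auto simp: bd_def)
  show "diagm (h*k) (bd h k G1) (bd h k G2) $$ (r, c) = bd (2*h) k (\<lambda>i. if i < h then G1 i else G2 (i - h)) $$ (r, c)"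
    using r c k lt_hk[OF k, of r h] lt_hk[OF k, of c h] ge_hk_div[OF k, of h r] ge_hk_div[OF k, of h c]
      ge_hk_mod[OF k, of h r] ge_hk_mod[OF k, of h c]
    by (auto simp: diagm_def bd_index)
qed (auto simp: diagm_def bd_def)

lemma in_block_diagm:
  assumes k: "k > 0" and A: "in_block_factor h k A" and D: "in_block_factor h k D"
  shows "in_block_factor (2*h) k (diagm (h*k) A D)"
proof -
  have "diagm (h*k) A D = diagm (h*k) (bd h k (\<lambda>i. diag_block k i A)) (bd h k (\<lambda>i. diag_block k i D))"
    by (rule arg_cong2[where f="diagm (h*k)"]) (rule in_block_bd[OF k A], rule in_block_bd[OF k D])
  also have "\<dots> = bd (2*h) k (\<lambda>i. if i < h then diag_block k i A else diag_block k (i-h) D)"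
    by (rule diagm_bd[OF k])
  finally have "diagm (h*k) A D = bd (2*h) k (\<lambda>i. if i < h then diag_block k i A else diag_block k (i-h) D)" .
  moreover have "in_block_factor (2*h) k (bd (2*h) k (\<lambda>i. if i < h then diag_block k i A else diag_block k (i-h) D))"
    by (rule bd_in_block[OF k]) (use in_block_props[OF A] in_block_props[OF D] in auto)
  ultimately show ?thesis by simp
qed

definition shiftp :: "nat \<Rightarrow> (nat \<times> nat) set \<Rightarrow> (nat \<times> nat) set" where
  "shiftp h S = (\<lambda>(i,j). (h+i, h+j)) ` S"

lemma disjoint_union:
  assumes "disjoint_pairs h S1" "disjoint_pairs h S2"
  shows "disjoint_pairs (2*h) (S1 \<union> shiftp h S2)"
proof -
  have A: "S1 \<subseteq> {..<h} \<times> {..<h}" "\<forall>(i, j) \<in> S1. i \<noteq> j"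
    "\<forall>(i, j) \<in> S1. \<forall>(i', j') \<in> S1. (i, j) \<noteq> (i', j') \<longrightarrow> i \<noteq> i' \<and> i \<noteq> j' \<and> j \<noteq> i' \<and> j \<noteq> j'"
    using assms(1) unfolding disjoint_pairs_def by auto
  have B: "S2 \<subseteq> {..<h} \<times> {..<h}" "\<forall>(i, j) \<in> S2. i \<noteq> j"
    "\<forall>(i, j) \<in> S2. \<forall>(i', j') \<in> S2. (i, j) \<noteq> (i', j') \<longrightarrow> i \<noteq> i' \<and> i \<noteq> j' \<and> j \<noteq> i' \<and> j \<noteq> j'"
    using assms(2) unfolding disjoint_pairs_def by auto
  have sh: "\<And>a b. (a, b) \<in> shiftp h S2 \<longleftrightarrow> h \<le> a \<and> h \<le> b \<and> (a - h, b - h) \<in> S2"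
    unfolding shiftp_def by force
  have key: "\<And>a b c d. (a,b) \<in> S1 \<union> shiftp h S2 \<Longrightarrow> (c,d) \<in> S1 \<union> shiftp h S2 \<Longrightarrow> (a,b) \<noteq> (c,d) \<Longrightarrow>
     a \<noteq> c \<and> a \<noteq> d \<and> b \<noteq> c \<and> b \<noteq> d"
  proof -
    fix a b c d assume x: "(a,b) \<in> S1 \<union> shiftp h S2" and y: "(c,d) \<in> S1 \<union> shiftp h S2" and ne: "(a,b) \<noteq> (c,d)"
    show "a \<noteq> c \<and> a \<noteq> d \<and> b \<noteq> c \<and> b \<noteq> d"
    proof (cases "(a,b) \<in> S1")
      case True
      note ab = this
      show ?thesis
      proof (cases "(c,d) \<in> S1")
        case True then show ?thesis using A(3) ab ne by fast
      next
        case False then show ?thesis using y sh A(1) ab by auto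
      qed
    next
      case False
      then have ab: "h \<le> a" "h \<le> b" "(a-h, b-h) \<in> S2" using x sh by auto
      show ?thesis
      proof (cases "(c,d) \<in> S1")
        case True then show ?thesis using A(1) ab by auto
      next
        case False
        then have cd: "h \<le> c" "h \<le> d" "(c-h, d-h) \<in> S2" using y sh by auto
        have "(a-h,b-h) \<noteq> (c-h,d-h)" using ne ab cd by auto
        then have "a-h \<noteq> c-h \<and> a-h \<noteq> d-h \<and> b-h \<noteq> c-h \<and> b-h \<noteq> d-h" using B(3) ab cd by fast
        then show ?thesis by auto
      qed
    qed
  qed
  have sub: "S1 \<union> shiftp h S2 \<subseteq> {..<2*h} \<times> {..<2*h}"
  proof
    fix x assume "x \<in> S1 \<union> shiftp h S2"
    then show "x \<in> {..<2*h} \<times> {..<2*h}" using A(1) B(1) sh by (cases x) fastforce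
  qed
  have irr: "\<And>a b. (a,b) \<in> S1 \<union> shiftp h S2 \<Longrightarrow> a \<noteq> b"
    using A(2) B(2) sh by fastforce
  show ?thesis unfolding disjoint_pairs_def
    using sub irr key by blast
qed

lemma diagm_layer:
  assumes k: "k > 0" and S1: "disjoint_pairs h S1" and S2: "disjoint_pairs h S2"
  shows "diagm (h*k) (layer_matrix h k S1) (layer_matrix h k S2) = layer_matrix (2*h) k (S1 \<union> shiftp h S2)"
proof (rule eq_matI)
  fix r c assume "r < dim_row (layer_matrix (2*h) k (S1 \<union> shiftp h S2))"
    "c < dim_col (layer_matrix (2*h) k (S1 \<union> shiftp h S2))"
  then have r: "r < h*k + h*k" and c: "c < h*k + h*k" by (auto simp: layer_matrix_def)
  have s1: "\<And>i j. (i,j) \<in> S1 \<Longrightarrow> i < h \<and> j < h" using S1 unfolding disjoint_pairs_def by auto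
  have s2: "\<And>i j. (i,j) \<in> S2 \<Longrightarrow> i < h \<and> j < h" using S2 unfolding disjoint_pairs_def by auto
  have sh: "\<And>a b. (a, b) \<in> shiftp h S2 \<longleftrightarrow> h \<le> a \<and> h \<le> b \<and> (a - h, b - h) \<in> S2"
    unfolding shiftp_def by force
  show "diagm (h*k) (layer_matrix h k S1) (layer_matrix h k S2) $$ (r, c) = layer_matrix (2*h) k (S1 \<union> shiftp h S2) $$ (r, c)"
  proof (cases "r < h*k")
    case rT: True
    show ?thesis
    proof (cases "c < h*k")
      case True
      then show ?thesis using rT r c lt_hk[OF k, of c h] lt_hk[OF k, of r h] sh
        by (auto simp: diagm_def layer_matrix_def)
    next
      case False
      then show ?thesis using rT r c lt_hk[OF k, of c h] lt_hk[OF k, of r h] sh s1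
        by (auto simp: diagm_def layer_matrix_def)
    qed
  next
    case rF: False
    show ?thesis
    proof (cases "c < h*k")
      case True
      then show ?thesis using rF r c lt_hk[OF k, of c h] lt_hk[OF k, of r h] sh s1
        by (auto simp: diagm_def layer_matrix_def)
    next
      case False
      have "r - h*k < h*k" "c - h*k < h*k" using r c by auto
      moreover have "(r = c) = (r - h*k = c - h*k)" using rF False by auto
      ultimately show ?thesis using rF False r c lt_hk[OF k, of c h] lt_hk[OF k, of r h] sh s1
        ge_hk_div[OF k, of h r] ge_hk_div[OF k, of h c] ge_hk_mod[OF k, of h r] ge_hk_mod[OF k, of h c]
        by (auto simp: diagm_def layer_matrix_def)
    qed
  qed
qed (auto simp: diagm_def layer_matrix_def)

lemma transversal_diagm:
  assumes k: "k > 0" and "transversal_layer h k L1" "transversal_layer h k L2"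
  shows "transversal_layer (2*h) k (diagm (h*k) L1 L2)"
proof -
  obtain S1 where S1: "disjoint_pairs h S1" "L1 = layer_matrix h k S1" using assms(2) unfolding transversal_layer_def by blast
  obtain S2 where S2: "disjoint_pairs h S2" "L2 = layer_matrix h k S2" using assms(3) unfolding transversal_layer_def by blast
  show ?thesis unfolding transversal_layer_def S1(2) S2(2) diagm_layer[OF k S1(1) S2(1)]
    using disjoint_union[OF S1(1) S2(1)] by blast
qed

lemma prodLD_diagm:
  assumes k: "k > 0"
  shows "okp h k ps1 \<Longrightarrow> okp h k ps2 \<Longrightarrow> length ps1 = length ps2 \<Longrightarrow>
    diagm (h*k) (prodLD (h*k) ps1) (prodLD (h*k) ps2) =
    prodLD (2*h*k) (map (\<lambda>((L1,D1),(L2,D2)). (diagm (h*k) L1 L2, diagm (h*k) D1 D2)) (zip ps1 ps2))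
    \<and> okp (2*h) k (map (\<lambda>((L1,D1),(L2,D2)). (diagm (h*k) L1 L2, diagm (h*k) D1 D2)) (zip ps1 ps2))"
proof (induction ps1 arbitrary: ps2)
  case Nil
  then show ?case using diagm_one[of "h*k"] by (simp add: two_hk okp_def)
next
  case (Cons p ps1)
  obtain q ps2' where ps2: "ps2 = q # ps2'" using Cons(4) by (cases ps2) auto
  obtain L1 D1 where p: "p = (L1,D1)" by fastforce
  obtain L2 D2 where q: "q = (L2,D2)" by fastforce
  have o1: "okp h k ps1" using Cons(2) by (simp add: okp_def)
  have o2: "okp h k ps2'" using Cons(3) ps2 by (simp add: okp_def)
  have len: "length ps1 = length ps2'" using Cons(4) ps2 by simp
  note IH = Cons(1)[OF o1 o2 len]
  have f1: "transversal_layer h k L1" "in_block_factor h k D1" using Cons(2) p by (auto simp: okp_def)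
  have f2: "transversal_layer h k L2" "in_block_factor h k D2" using Cons(3) ps2 q by (auto simp: okp_def)
  have c: "L1 \<in> carrier_mat (h*k) (h*k)" "D1 \<in> carrier_mat (h*k) (h*k)"
     "L2 \<in> carrier_mat (h*k) (h*k)" "D2 \<in> carrier_mat (h*k) (h*k)"
    using f1 f2 layer_carrier in_block_carrier by auto
  have P: "prodLD (h*k) ps1 \<in> carrier_mat (h*k) (h*k)" "prodLD (h*k) ps2' \<in> carrier_mat (h*k) (h*k)"
    using prodLD_carrier[OF o1] prodLD_carrier[OF o2] by auto
  have "diagm (h*k) (prodLD (h*k) (p#ps1)) (prodLD (h*k) ps2)
     = diagm (h*k) (L1 * D1 * prodLD (h*k) ps1) (L2 * D2 * prodLD (h*k) ps2')"
    using p q ps2 by simp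
  also have "\<dots> = diagm (h*k) L1 L2 * diagm (h*k) D1 D2 * diagm (h*k) (prodLD (h*k) ps1) (prodLD (h*k) ps2')"
    using c P by (simp add: diagm_mult)
  finally show ?case using IH p q ps2 transversal_diagm[OF k f1(1) f2(1)] in_block_diagm[OF k f1(2) f2(2)]
    by (simp add: okp_def)
qed

lemma nf_diagm:
  assumes k: "k > 0" and A: "nf h k m A" and D: "nf h k m D"
  shows "nf (2*h) k m (diagm (h*k) A D)"
proof -
  obtain A0 ps1 where A0: "in_block_factor h k A0" "length ps1 = m" "okp h k ps1"
    and eA: "A = A0 * prodLD (h*k) ps1" using A unfolding nf_def by blast
  obtain D0 ps2 where D0: "in_block_factor h k D0" "length ps2 = m" "okp h k ps2"
    and eD: "D = D0 * prodLD (h*k) ps2" using D unfolding nf_def by blast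
  note pd = prodLD_diagm[OF k A0(3) D0(3)] 
  have "diagm (h*k) A D = diagm (h*k) A0 D0 * diagm (h*k) (prodLD (h*k) ps1) (prodLD (h*k) ps2)"
    using eA eD in_block_carrier[OF A0(1)] in_block_carrier[OF D0(1)] prodLD_carrier[OF A0(3)] prodLD_carrier[OF D0(3)]
    by (simp add: diagm_mult)
  then show ?thesis unfolding nf_def using pd A0 D0 in_block_diagm[OF k A0(1) D0(1)]
    by (intro exI[of _ "diagm (h*k) A0 D0"] exI[of _ "map (\<lambda>((L1,D1),(L2,D2)). (diagm (h*k) L1 L2, diagm (h*k) D1 D2)) (zip ps1 ps2)"])
      (auto simp: mult.assoc)
qed

lemma lp_diagm:
  assumes k: "k > 0" and "layered_product h k m A" "layered_product h k m D"
  shows "layered_product (2*h) k m (diagm (h*k) A D)"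
  using nf_lp nf_diagm[OF k] lp_nf[OF k] assms by blast


lemma inv_ex:
  assumes A: "(A::bit mat) \<in> carrier_mat n n" and "invertible_mat A"
  shows "\<exists>B. B \<in> carrier_mat n n \<and> A * B = 1\<^sub>m n \<and> B * A = 1\<^sub>m n"
proof -
  obtain B where AB: "A * B = 1\<^sub>m n" and BA: "B * A = 1\<^sub>m (dim_row B)"
    using assms unfolding invertible_mat_def inverts_mat_def by auto
  have "dim_col B = n" using AB by (metis index_mult_mat(3) index_one_mat(3))
  moreover have "dim_row B = n" using BA A by (metis index_mult_mat(3) index_one_mat(3) carrier_matD(2))
  ultimately show ?thesis using AB BA by auto
qed

lemma inv_of_inverse:
  assumes "(A::bit mat) \<in> carrier_mat n n" "B \<in> carrier_mat n n" "A * B = 1\<^sub>m n" "B * A = 1\<^sub>m n"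
  shows "invertible_mat A"
  using assms unfolding invertible_mat_def inverts_mat_def square_mat.simps by auto

lemma mat_vec_index:
  assumes "v \<in> carrier_vec n" "i < n"
  shows "(mat n n F *\<^sub>v v) $ i = (\<Sum>j<n. F (i,j) * v $ j)"
  using mult_vec_index[of "mat n n F" n v i] assms by simp

lemma SOI:
  assumes k: "k > 0" and B: "(B::bit mat) \<in> carrier_mat k k"
  shows "\<exists>P Q. P \<in> carrier_mat k k \<and> Q \<in> carrier_mat k k \<and> invertible_mat P \<and>
     (invertible_mat Q \<or> Q = 0\<^sub>m k k) \<and> B = P + Q"
proof (cases "invertible_mat B")
  case True
  then show ?thesis using B by (intro exI[of _ B] exI[of _ "0\<^sub>m k k"]) auto
next
  case False
  obtain R where Rdef: "gauss_jordan_single B = R" by simp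
  note g = gauss_jordan_single[OF B Rdef]
  have Rc: "R \<in> carrier_mat k k" using g(2) .
  obtain P0 Q0 where R: "R = P0 * B" and P0: "P0 \<in> carrier_mat k k" and Q0: "Q0 \<in> carrier_mat k k"
    and PQ: "P0 * Q0 = 1\<^sub>m k" and QP: "Q0 * P0 = 1\<^sub>m k" using g(4) by blast
  have BQR: "B = Q0 * R"
    using R QP B P0 Q0 by (simp add: assoc_mult_mat[OF Q0 P0 B, symmetric])
  have Q0i: "invertible_mat Q0" by (rule inv_of_inverse[OF Q0 P0 QP PQ])
  obtain f where pf: "pivot_fun R f k" using g(3) Rc unfolding row_echelon_form_def by auto
  have dR: "dim_row R = k" using Rc by auto
  note pD = pivot_funD[OF dR pf]
  define PR where "PR = {i. i < k \<and> f i < k}"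
  define ZR where "ZR = {i. i < k \<and> f i = k}"
  define NP where "NP = {j. j < k \<and> j \<notin> f ` PR}"
  have propg: "f j = k" if "f i = k" "i \<le> j" "j < k" for i j
    using that
  proof (induction j)
    case 0 then show ?case by simp
  next
    case (Suc j)
    show ?case
    proof (cases "i = Suc j")
      case True then show ?thesis using Suc by simp
    next
      case False
      then have "f j = k" using Suc by simp
      then show ?thesis using pD(3)[of j] pD(1)[of "Suc j"] Suc by fastforce
    qed
  qed
  have injf: "inj_on f PR"
  proof (rule inj_onI)
    fix i i' assume i: "i \<in> PR" and i': "i' \<in> PR" and e: "f i = f i'"
    show "i = i'"
    proof (rule ccontr)
      assume "i \<noteq> i'"
      then have "R $$ (i', f i) = 0" using pD(5)[of i i'] i i' by (auto simp: PR_def)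
      moreover have "R $$ (i', f i') = 1" using pD(4)[of i'] i' by (auto simp: PR_def)
      ultimately show False using e by simp
    qed
  qed
  have ZR_eq: "ZR = {..<k} - PR" using pD(1) by (force simp: ZR_def PR_def)
  have NP_eq: "NP = {..<k} - f ` PR" by (auto simp: NP_def)
  have fPR: "f ` PR \<subseteq> {..<k}" by (auto simp: PR_def)
  have cardeq: "card ZR = card NP"
  proof -
    have "card ZR = k - card PR" unfolding ZR_eq by (subst card_Diff_subset) (auto simp: PR_def)
    moreover have "card NP = k - card (f ` PR)" unfolding NP_eq
      by (subst card_Diff_subset) (auto simp: PR_def intro: finite_subset[OF fPR])
    moreover have "card (f ` PR) = card PR" using card_image[OF injf] .
    ultimately show ?thesis by simp
  qed
  obtain g where g: "bij_betw g ZR NP"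
    using finite_same_card_bij[of ZR NP] cardeq by (auto simp: ZR_def NP_def)
  have gZ: "g i \<in> NP" if "i \<in> ZR" for i using g that bij_betwE by blast
  have gs: "\<exists>i\<in>ZR. g i = j" if "j \<in> NP" for j using g that
    by (metis bij_betw_def imageE)
  define W where "W = mat k k (\<lambda>(i,j). if f i < k then R $$ (i,j) else if j = g i then 1 else (0::bit))"
  define Dm where "Dm = mat k k (\<lambda>(i,j). if i = j \<and> f i < k then 1 else (0::bit))"
  define Cm where "Cm = mat k k (\<lambda>(i,j). if j = (i + 1) mod k then 1 else (0::bit))"
  have Wc: "W \<in> carrier_mat k k" and Dc: "Dm \<in> carrier_mat k k" and Cc: "Cm \<in> carrier_mat k k"
    by (auto simp: W_def Dm_def Cm_def)
  have RDW: "R = Dm * W"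
  proof (rule eq_matI)
    fix i j assume "i < dim_row (Dm * W)" "j < dim_col (Dm * W)"
    then have i: "i < k" and j: "j < k" using Dc Wc by auto
    have "(Dm * W) $$ (i,j) = (\<Sum>s<k. Dm $$ (i,s) * W $$ (s,j))" by (rule mult_index[OF Dc Wc i j])
    also have "\<dots> = (\<Sum>s<k. if s = i then (if f i < k then W $$ (i,j) else 0) else 0)"
      by (rule sum.cong) (use i in \<open>auto simp: Dm_def\<close>)
    also have "\<dots> = (if f i < k then W $$ (i,j) else 0)" using i by simp
    also have "\<dots> = R $$ (i,j)"
    proof (cases "f i < k")
      case True then show ?thesis using i j by (simp add: W_def)
    next
      case False
      then have "f i = k" using pD(1)[OF i] by simp
      then show ?thesis using pD(2)[OF i, of j] j False by simp
    qed
    finally show "R $$ (i,j) = (Dm * W) $$ (i,j)" by simp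
  qed (use Rc Dc Wc in auto)
  have Winv: "invertible_mat W"
  proof (rule inv_kernel[OF Wc])
    fix v :: "bit vec" assume v: "v \<in> carrier_vec k" and Wv: "W *\<^sub>v v = 0\<^sub>v k"
    have row: "(\<Sum>j<k. (if f i < k then R $$ (i,j) else if j = g i then 1 else 0) * v $ j) = 0" if i: "i < k" for i
      using mat_vec_index[OF v i, of "\<lambda>(i,j). if f i < k then R $$ (i,j) else if j = g i then 1 else (0::bit)"]
        Wv i unfolding W_def by simp
    have np: "v $ j = 0" if j: "j \<in> NP" for j
    proof -
      obtain i where i: "i \<in> ZR" "g i = j" using gs[OF j] by blast
      have ik: "i < k" "f i = k" using i by (auto simp: ZR_def)
      have jk: "j < k" using j by (auto simp: NP_def)
      have "0 = (\<Sum>j'<k. (if f i < k then R $$ (i,j') else if j' = g i then 1 else 0) * v $ j')" using row[OF ik(1)] by simp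
      also have "\<dots> = (\<Sum>j'<k. if j' = j then v $ j else 0)"
        by (rule sum.cong) (use ik i in auto)
      also have "\<dots> = v $ j" using jk by simp
      finally show ?thesis by simp
    qed
    have pv: "v $ (f i) = 0" if i: "i \<in> PR" for i
    proof -
      have ik: "i < k" "f i < k" using i by (auto simp: PR_def)
      have "0 = (\<Sum>j<k. (if f i < k then R $$ (i,j) else if j = g i then 1 else 0) * v $ j)" using row[OF ik(1)] by simp
      also have "\<dots> = (\<Sum>j<k. if j = f i then v $ (f i) else 0)"
      proof (rule sum.cong[OF refl])
        fix j assume j: "j \<in> {..<k}"
        show "(if f i < k then R $$ (i,j) else if j = g i then 1 else 0) * v $ j = (if j = f i then v $ (f i) else 0)"
        proof (cases "j = f i")
          case True then show ?thesis using pD(4)[OF ik(1)] ik by simp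
        next
          case False
          show ?thesis
          proof (cases "j \<in> NP")
            case True then show ?thesis using np False by simp
          next
            case notNP: False
            then obtain i' where i': "i' \<in> PR" "j = f i'" using j by (auto simp: NP_def)
            then have "i' \<noteq> i" using False by auto
            then have "R $$ (i, f i') = 0" using pD(5)[of i' i] i' ik by (auto simp: PR_def)
            then show ?thesis using i' False ik by simp
          qed
        qed
      qed
      also have "\<dots> = v $ (f i)" using ik by simp
      finally show ?thesis by simp
    qed
    show "v = 0\<^sub>v k"
    proof (rule eq_vecI)
      fix j assume "j < dim_vec (0\<^sub>v k :: bit vec)"
      then have j: "j < k" by simp
      show "v $ j = 0\<^sub>v k $ j"
      proof (cases "j \<in> f ` PR")
        case True then show ?thesis using pv j by auto
      next
        case False then show ?thesis using np[of j] j by (auto simp: NP_def)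
      qed
    qed (use v in auto)
  qed
  have Cinv: "invertible_mat Cm"
  proof (rule inv_kernel[OF Cc])
    fix v :: "bit vec" assume v: "v \<in> carrier_vec k" and Cv: "Cm *\<^sub>v v = 0\<^sub>v k"
    have row: "v $ ((i + 1) mod k) = 0" if i: "i < k" for i
    proof -
      have "0 = (Cm *\<^sub>v v) $ i" using Cv i by simp
      also have "\<dots> = (\<Sum>j<k. (if j = (i + 1) mod k then 1 else 0) * v $ j)"
        unfolding Cm_def by (subst mat_vec_index[OF v i]) simp
      also have "\<dots> = (\<Sum>j<k. if j = (i + 1) mod k then v $ ((i + 1) mod k) else 0)"
        by (rule sum.cong) auto
      also have "\<dots> = v $ ((i + 1) mod k)" using k by simp
      finally show ?thesis by simp
    qed
    show "v = 0\<^sub>v k"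
    proof (rule eq_vecI)
      fix j assume "j < dim_vec (0\<^sub>v k :: bit vec)"
      then have j: "j < k" by simp
      show "v $ j = 0\<^sub>v k $ j"
      proof (cases j)
        case 0 then show ?thesis using row[of "k - 1"] k by simp
      next
        case (Suc j') then show ?thesis using row[of j'] j by simp
      qed
    qed (use v in auto)
  qed
  have ZRne: "ZR \<noteq> {}"
  proof
    assume "ZR = {}"
    then have allp: "\<And>i. i < k \<Longrightarrow> f i < k" using pD(1) by (force simp: ZR_def)
    then have "Dm = 1\<^sub>m k" by (auto simp: Dm_def)
    then have "R = W" using RDW Wc by simp
    then have "invertible_mat B" using BQR inv_mult[OF Q0 Rc Q0i] Winv by simp
    then show False using False by simp
  qed
  then obtain i0 where i0: "i0 < k" "f i0 = k" by (auto simp: ZR_def)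
  have fk: "f (k - 1) = k" using propg[OF i0(2), of "k-1"] i0 by simp
  have DCc: "Dm + Cm \<in> carrier_mat k k" using Dc Cc by simp
  have DCinv: "invertible_mat (Dm + Cm)"
  proof (rule inv_kernel[OF DCc])
    fix v :: "bit vec" assume v: "v \<in> carrier_vec k" and Cv: "(Dm + Cm) *\<^sub>v v = 0\<^sub>v k"
    have row: "(if f i < k then v $ i else 0) + v $ ((i + 1) mod k) = 0" if i: "i < k" for i
    proof -
      have "0 = ((Dm + Cm) *\<^sub>v v) $ i" using Cv i by simp
      also have "\<dots> = (Dm *\<^sub>v v + Cm *\<^sub>v v) $ i"
        by (rule arg_cong[where f="\<lambda>x. x $ i"], rule add_mult_distrib_mat_vec[OF Dc Cc v])
      also have "\<dots> = (Dm *\<^sub>v v) $ i + (Cm *\<^sub>v v) $ i"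
        by (rule index_add_vec(1)) (use Cc i in simp)
      also have "(Dm *\<^sub>v v) $ i = (\<Sum>j<k. (if i = j \<and> f i < k then 1 else 0) * v $ j)"
        unfolding Dm_def by (subst mat_vec_index[OF v i]) simp
      also have "\<dots> = (\<Sum>j<k. if j = i then (if f i < k then v $ i else 0) else 0)"
        by (rule sum.cong) auto
      also have "\<dots> = (if f i < k then v $ i else 0)" using i by simp
      also have "(Cm *\<^sub>v v) $ i = (\<Sum>j<k. (if j = (i + 1) mod k then 1 else 0) * v $ j)"
        unfolding Cm_def by (subst mat_vec_index[OF v i]) simp
      also have "\<dots> = (\<Sum>j<k. if j = (i + 1) mod k then v $ ((i + 1) mod k) else 0)"
        by (rule sum.cong) auto
      also have "\<dots> = v $ ((i + 1) mod k)" using k by simp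
      finally show ?thesis by simp
    qed
    have z: "v $ j = 0" if "j < k" for j
      using that
    proof (induction j)
      case 0
      have "(k - 1 + 1) mod k = 0" using k by simp
      then show ?case using row[of "k - 1"] k fk by simp
    next
      case (Suc j)
      then have "v $ j = 0" by simp
      then show ?case using row[of j] Suc(2) by (simp split: if_splits)
    qed
    show "v = 0\<^sub>v k" by (rule eq_vecI) (use z v in auto)
  qed
  define P where "P = Q0 * ((Dm + Cm) * W)"
  define Q where "Q = Q0 * (Cm * W)"
  have Pc: "P \<in> carrier_mat k k" and Qc: "Q \<in> carrier_mat k k" using Q0 DCc Wc Cc by (auto simp: P_def Q_def)
  have "P + Q = Q0 * ((Dm + Cm) * W + Cm * W)"
    unfolding P_def Q_def
    by (rule mult_add_distrib_mat[OF Q0, symmetric]) (use DCc Wc Cc in auto)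
  also have "(Dm + Cm) * W + Cm * W = Dm * W"
  proof -
    have "(Dm + Cm) * W = Dm * W + Cm * W" by (rule add_mult_distrib_mat[OF Dc Cc Wc])
    moreover have "Dm * W + Cm * W + Cm * W = Dm * W"
      by (rule eq_matI) (use Dc Cc Wc in \<open>auto simp: add.assoc\<close>)
    ultimately show ?thesis by simp
  qed
  finally have "P + Q = B" using RDW BQR by simp
  moreover have "invertible_mat P" unfolding P_def
    by (rule inv_mult[OF Q0 _ Q0i]) (use DCc Wc inv_mult[OF DCc Wc DCinv Winv] in auto)
  moreover have "invertible_mat Q" unfolding Q_def
    by (rule inv_mult[OF Q0 _ Q0i]) (use Cc Wc inv_mult[OF Cc Wc Cinv Winv] in auto)
  ultimately show ?thesis using Pc Qc by blast
qed


definition LL :: "nat \<Rightarrow> bit mat \<Rightarrow> bit mat" where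
  "LL n M = four_block_mat (1\<^sub>m n) (0\<^sub>m n n) M (1\<^sub>m n)"

lemma LL_carrier: "LL n M \<in> carrier_mat (n+n) (n+n)"
  by (simp add: LL_def)

lemma LL_mult:
  assumes "M1 \<in> carrier_mat n n" "M2 \<in> carrier_mat n n"
  shows "LL n M1 * LL n M2 = LL n (M1 + M2)"
  unfolding LL_def using mult_four_block_mat[OF one_carrier_mat zero_carrier_mat assms(1) one_carrier_mat
    one_carrier_mat zero_carrier_mat assms(2) one_carrier_mat] assms by simp

lemma LL_zero: "LL n (0\<^sub>m n n) = 1\<^sub>m (n+n)"
  unfolding LL_def by simp

lemma shift_inj:
  assumes "i < h" "i' < h" "(i + t) mod h = (i' + t) mod (h::nat)"
  shows "i = i'"
proof -
  define u where "u = t mod h"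
  have u: "u < h" using assms(1) by (simp add: u_def)
  have red: "(x + t) mod h = (if x + u < h then x + u else x + u - h)" if "x < h" for x
  proof -
    have "(x + t) mod h = (x + u) mod h" by (simp add: u_def mod_add_right_eq)
    also have "\<dots> = (if x + u < h then x + u else x + u - h)"
    proof (cases "x + u < h")
      case False
      then have "(x + u) mod h = (x + u - h) mod h" by (simp add: le_mod_geq)
      also have "\<dots> = x + u - h" using that u by simp
      finally show ?thesis using False by simp
    qed simp
    finally show ?thesis .
  qed
  show ?thesis using assms red[OF assms(1)] red[OF assms(2)] by (auto split: if_splits)
qed

lemma bd_cong: "(\<And>i. i < N \<Longrightarrow> G1 i = G2 i) \<Longrightarrow> bd N k G1 = bd N k G2"
  by (rule eq_matI) (auto simp: bd_index div_lt)

lemma one_layer: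
  assumes k: "k > 0" and h: "h > 0"
    and G: "\<And>i j. i < h \<Longrightarrow> j < h \<Longrightarrow> G i j \<in> carrier_mat k k \<and> (invertible_mat (G i j) \<or> G i j = 0\<^sub>m k k)"
  shows "layered_product (2*h) k 1 (LL (h*k) (mat (h*k) (h*k) (\<lambda>(r,c).
     if c div k = (r div k + t) mod h then G (r div k) (c div k) $$ (r mod k, c mod k) else 0)))"
proof -
  define Sh where "Sh = mat (h*k) (h*k) (\<lambda>(r,c).
     if c div k = (r div k + t) mod h then G (r div k) (c div k) $$ (r mod k, c mod k) else (0::bit))"
  define Gd where "Gd i = G i ((i + t) mod h)" for i
  define inc where "inc i = (Gd i \<noteq> 0\<^sub>m k k)" for i
  define Gb where "Gb i = (if inc i then Gd i else 1\<^sub>m k)" for i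
  have Gb: "Gb i \<in> carrier_mat k k \<and> invertible_mat (Gb i)" if "i < h" for i
  proof -
    have "(i + t) mod h < h" using h by simp
    then show ?thesis using G[OF that, of "(i + t) mod h"] inv_one by (auto simp: Gb_def inc_def Gd_def)
  qed
  define Gi where "Gi i = (SOME B. B \<in> carrier_mat k k \<and> Gb i * B = 1\<^sub>m k \<and> B * Gb i = 1\<^sub>m k)" for i
  have Gi: "Gi i \<in> carrier_mat k k \<and> Gb i * Gi i = 1\<^sub>m k \<and> Gi i * Gb i = 1\<^sub>m k" if "i < h" for i
    unfolding Gi_def by (rule someI_ex) (use inv_ex Gb[OF that] in blast)
  have Giinv: "Gi i \<in> carrier_mat k k \<and> invertible_mat (Gi i)" if "i < h" for i
    using Gi[OF that] Gb[OF that] inv_of_inverse[of "Gi i" k "Gb i"] by auto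
  define S0 where "S0 = {(i, (i + t) mod h) | i. i < h \<and> inc i}"
  define S where "S = {(h + i, (i + t) mod h) | i. i < h \<and> inc i}"
  define Pm where "Pm = mat (h*k) (h*k) (\<lambda>(r,c). if (r div k, c div k) \<in> S0 \<and> r mod k = c mod k then 1 else (0::bit))"
  have Pc: "Pm \<in> carrier_mat (h*k) (h*k)" by (simp add: Pm_def)
  have Shc: "Sh \<in> carrier_mat (h*k) (h*k)" by (simp add: Sh_def)
  have disj: "disjoint_pairs (2*h) S"
  proof -
    have m1: "x mod h \<noteq> h + i" "h + i \<noteq> x mod h" "x mod h < 2 * h" for x i
      using h mod_less_divisor[OF h, of x] by auto
    show ?thesis unfolding disjoint_pairs_def S_def using h by (auto dest: shift_inj simp: m1)
  qed
  have S_iff: "(a, b) \<in> S \<longleftrightarrow> h \<le> a \<and> (a - h, b) \<in> S0" for a b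
    unfolding S_def S0_def by force
  have S0_sub: "(a, b) \<in> S0 \<Longrightarrow> a < h \<and> b < h" for a b
    unfolding S0_def using h by auto
  have layer: "layer_matrix (2*h) k S = LL (h*k) Pm"
  proof (rule eq_matI)
    fix r c assume "r < dim_row (LL (h*k) Pm)" "c < dim_col (LL (h*k) Pm)"
    then have r: "r < h*k + h*k" and c: "c < h*k + h*k" by (auto simp: LL_def)
    show "layer_matrix (2*h) k S $$ (r, c) = LL (h*k) Pm $$ (r, c)"
    proof (cases "r < h*k")
      case rT: True
      then show ?thesis using rT r c lt_hk[OF k, of c h] lt_hk[OF k, of r h] S_iff
        by (auto simp: LL_def layer_matrix_def Pm_def)
    next
      case rF: False
      show ?thesis
      proof (cases "c < h*k")
        case True
        have "r - h*k < h*k" using r by simp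
        then show ?thesis using rF True r c lt_hk[OF k, of c h] lt_hk[OF k, of r h] S_iff
          ge_hk_div[OF k, of h r] ge_hk_mod[OF k, of h r]
          by (auto simp: LL_def layer_matrix_def Pm_def)
      next
        case False
        have "(r = c) = (r - h*k = c - h*k)" using rF False by auto
        then show ?thesis using rF False r c lt_hk[OF k, of c h] lt_hk[OF k, of r h] S_iff S0_sub
          ge_hk_div[OF k, of h r] ge_hk_div[OF k, of h c]
          by (auto simp: LL_def layer_matrix_def)
      qed
    qed
  qed (auto simp: LL_def layer_matrix_def)
  have tl: "transversal_layer (2*h) k (LL (h*k) Pm)"
    unfolding transversal_layer_def using disj layer by metis
  define Dg where "Dg = diagm (h*k) (1\<^sub>m (h*k)) (bd h k Gb)"
  define Dg' where "Dg' = diagm (h*k) (1\<^sub>m (h*k)) (bd h k Gi)"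
  have ibD: "in_block_factor (2*h) k Dg" "in_block_factor (2*h) k Dg'"
  proof -
    have "Dg = bd (2*h) k (\<lambda>i. if i < h then 1\<^sub>m k else Gb (i - h))"
      unfolding Dg_def using diagm_bd[OF k, of h "\<lambda>_. 1\<^sub>m k" Gb] bd_one[OF k, of h] by simp
    moreover have "in_block_factor (2*h) k (bd (2*h) k (\<lambda>i. if i < h then 1\<^sub>m k else Gb (i - h)))"
      by (rule bd_in_block[OF k]) (use Gb inv_one in auto)
    ultimately show "in_block_factor (2*h) k Dg" by simp
    have "Dg' = bd (2*h) k (\<lambda>i. if i < h then 1\<^sub>m k else Gi (i - h))"
      unfolding Dg'_def using diagm_bd[OF k, of h "\<lambda>_. 1\<^sub>m k" Gi] bd_one[OF k, of h] by simp
    moreover have "in_block_factor (2*h) k (bd (2*h) k (\<lambda>i. if i < h then 1\<^sub>m k else Gi (i - h)))"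
      by (rule bd_in_block[OF k]) (use Giinv inv_one in auto)
    ultimately show "in_block_factor (2*h) k Dg'" by simp
  qed
  have GbGi: "bd h k Gb * bd h k Gi = 1\<^sub>m (h*k)"
  proof -
    have "bd h k Gb * bd h k Gi = bd h k (\<lambda>i. Gb i * Gi i)" by (rule bd_mult[OF k]) (use Gb Gi in auto)
    also have "\<dots> = bd h k (\<lambda>_. 1\<^sub>m k)" by (rule bd_cong) (use Gi in auto)
    finally show ?thesis using bd_one[OF k, of h] by simp
  qed
  have GbP: "bd h k Gb * Pm = Sh"
  proof (rule eq_matI)
    fix r c assume "r < dim_row Sh" "c < dim_col Sh"
    then have r: "r < h*k" and c: "c < h*k" by (auto simp: Sh_def)
    define i where "i = r div k"
    define j where "j = c div k"
    have ih: "i < h" "j < h" using div_lt[OF r] div_lt[OF c] by (auto simp: i_def j_def)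
    have cm: "c mod k < k" using k by simp
    have "(bd h k Gb * Pm) $$ (r,c) = (\<Sum>s<k. Gb i $$ (r mod k, s) * Pm $$ (i*k + s, c))"
      unfolding i_def by (rule bd_mult_left[OF k Pc r c])
    also have "\<dots> = (\<Sum>s<k. if s = c mod k then (if (i, j) \<in> S0 then Gb i $$ (r mod k, c mod k) else 0) else 0)"
    proof (rule sum.cong[OF refl])
      fix s assume s: "s \<in> {..<k}"
      have "i*k + s < h*k"
      proof -
        have "(i + 1) * k \<le> h * k" using ih by (intro mult_le_mono1) simp
        then show ?thesis using s by (simp add: algebra_simps)
      qed
      then show "Gb i $$ (r mod k, s) * Pm $$ (i*k + s, c) =
        (if s = c mod k then (if (i, j) \<in> S0 then Gb i $$ (r mod k, c mod k) else 0) else 0)"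
        using s c k by (auto simp: Pm_def j_def)
    qed
    also have "\<dots> = (if (i, j) \<in> S0 then Gb i $$ (r mod k, c mod k) else 0)"
      using cm by simp
    also have "\<dots> = Sh $$ (r,c)"
    proof -
      have rm: "r mod k < k" using k by simp
      have "(i, j) \<in> S0 \<longleftrightarrow> j = (i + t) mod h \<and> inc i" unfolding S0_def using ih by auto
      moreover have "\<not> inc i \<Longrightarrow> G i ((i + t) mod h) $$ (r mod k, c mod k) = 0"
        using rm cm unfolding inc_def Gd_def by simp
      ultimately show ?thesis using r c
        by (auto simp: Sh_def Gb_def Gd_def i_def j_def)
    qed
    finally show "(bd h k Gb * Pm) $$ (r,c) = Sh $$ (r,c)" .
  qed (auto simp: Sh_def Pm_def)
  have prod: "Dg * LL (h*k) Pm * Dg' = LL (h*k) Sh"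
  proof -
    have bGb: "bd h k Gb \<in> carrier_mat (h*k) (h*k)" "bd h k Gi \<in> carrier_mat (h*k) (h*k)" by auto
    have "Dg * LL (h*k) Pm = four_block_mat (1\<^sub>m (h*k)) (0\<^sub>m (h*k) (h*k)) (bd h k Gb * Pm) (bd h k Gb)"
      unfolding Dg_def diagm_def LL_def
      using mult_four_block_mat[OF one_carrier_mat zero_carrier_mat zero_carrier_mat bGb(1)
        one_carrier_mat zero_carrier_mat Pc one_carrier_mat] bGb Pc by simp
    also have "\<dots> * Dg' = four_block_mat (1\<^sub>m (h*k)) (0\<^sub>m (h*k) (h*k)) (bd h k Gb * Pm) (bd h k Gb * bd h k Gi)"
      unfolding Dg'_def diagm_def
      using mult_four_block_mat[OF one_carrier_mat zero_carrier_mat mult_carrier_mat[OF bGb(1) Pc] bGb(1)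
        one_carrier_mat zero_carrier_mat zero_carrier_mat bGb(2)] bGb Pc by simp
    finally show ?thesis using GbGi GbP unfolding LL_def by simp
  qed
  have "layered_product (2*h) k (0 + 1 + 0) (Dg * LL (h*k) Pm * Dg')"
    by (intro lp_mult lp_in_block lp_layer ibD tl)
  then show ?thesis using prod unfolding Sh_def by simp
qed


lemma mod_red: "x < 2 * h \<Longrightarrow> x mod h = (if x < h then x else x - (h::nat))"
proof (cases "x < h")
  case False
  assume x: "x < 2 * h"
  then have "x mod h = (x - h) mod h" using False by (simp add: le_mod_geq)
  also have "\<dots> = x - h" using x False by simp
  finally show ?thesis using False by simp
qed simp

lemma t0_iff:
  assumes "i < h" "j < h" "t < (h::nat)"
  shows "(j + h - i) mod h = t \<longleftrightarrow> j = (i + t) mod h"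
proof -
  have "i + t < 2 * h" "j + h - i < 2 * h" using assms by auto
  from mod_red[OF this(1)] mod_red[OF this(2)] show ?thesis using assms by auto
qed

lemma bipartite:
  assumes k: "k > 0" and h: "h > 0" and B: "B \<in> carrier_mat (h*k) (h*k)"
  shows "layered_product (2*h) k (2*h) (LL (h*k) B)"
proof -
  define bB where "bB i j = mat k k (\<lambda>(r,c). B $$ (i*k + r, j*k + c))" for i j
  define props where "props i j pq \<longleftrightarrow> fst pq \<in> carrier_mat k k \<and> snd pq \<in> carrier_mat k k \<and> invertible_mat (fst pq) \<and>
     (invertible_mat (snd pq) \<or> snd pq = 0\<^sub>m k k) \<and> bB i j = fst pq + snd pq" for i j pq
  define PQ where "PQ i j = (SOME pq. props i j pq)" for i j
  have PQ: "props i j (PQ i j)" for i j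
  proof -
    have "bB i j \<in> carrier_mat k k" by (simp add: bB_def)
    from SOI[OF k this] obtain P Q where "props i j (P, Q)" unfolding props_def by auto
    then show ?thesis unfolding PQ_def by (rule someI)
  qed
  define Pf where "Pf i j = fst (PQ i j)" for i j
  define Qf where "Qf i j = snd (PQ i j)" for i j
  define Shm where "Shm G t = mat (h*k) (h*k) (\<lambda>(r,c).
     if c div k = (r div k + t) mod h then G (r div k) (c div k) $$ (r mod k, c mod k) else (0::bit))" for G t
  define Bp where "Bp t = mat (h*k) (h*k) (\<lambda>(r,c). if (c div k + h - r div k) mod h < t then B $$ (r,c) else 0)" for t
  have Shc: "Shm G t \<in> carrier_mat (h*k) (h*k)" for G t by (simp add: Shm_def)
  have Bpc: "Bp t \<in> carrier_mat (h*k) (h*k)" for t by (simp add: Bp_def)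
  have lpP: "layered_product (2*h) k 1 (LL (h*k) (Shm Pf t))" for t
    unfolding Shm_def by (rule one_layer[OF k h]) (use PQ in \<open>auto simp: props_def Pf_def\<close>)
  have lpQ: "layered_product (2*h) k 1 (LL (h*k) (Shm Qf t))" for t
    unfolding Shm_def by (rule one_layer[OF k h]) (use PQ in \<open>auto simp: props_def Qf_def\<close>)
  have step: "Bp (Suc t) = Bp t + Shm Pf t + Shm Qf t" if t: "t < h" for t
  proof (rule eq_matI)
    fix r c assume "r < dim_row (Bp t + Shm Pf t + Shm Qf t)" "c < dim_col (Bp t + Shm Pf t + Shm Qf t)"
    then have r: "r < h*k" and c: "c < h*k" by (auto simp: Bp_def Shm_def)
    define i where "i = r div k"
    define j where "j = c div k"
    have ih: "i < h" "j < h" using div_lt[OF r] div_lt[OF c] by (auto simp: i_def j_def)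
    have rm: "r mod k < k" and cm: "c mod k < k" using k by auto
    have iff: "(j + h - i) mod h = t \<longleftrightarrow> j = (i + t) mod h" by (rule t0_iff[OF ih t])
    have pq: "Pf i j $$ (r mod k, c mod k) + Qf i j $$ (r mod k, c mod k) = B $$ (r, c)"
    proof -
      have "Pf i j $$ (r mod k, c mod k) + Qf i j $$ (r mod k, c mod k) = (Pf i j + Qf i j) $$ (r mod k, c mod k)"
        by (rule index_add_mat(1)[symmetric]) (use PQ[of i j] rm cm in \<open>auto simp: props_def Pf_def Qf_def\<close>)
      also have "\<dots> = bB i j $$ (r mod k, c mod k)" using PQ[of i j] by (simp add: props_def Pf_def Qf_def)
      also have "\<dots> = B $$ (i*k + r mod k, j*k + c mod k)" using rm cm by (simp add: bB_def)
      also have "\<dots> = B $$ (r, c)" unfolding i_def j_def by (metis div_mult_mod_eq)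
      finally show ?thesis .
    qed
    show "Bp (Suc t) $$ (r, c) = (Bp t + Shm Pf t + Shm Qf t) $$ (r, c)"
      using r c iff pq unfolding i_def j_def by (auto simp: Bp_def Shm_def)
  qed (auto simp: Bp_def Shm_def)
  have ind: "layered_product (2*h) k (2*t) (LL (h*k) (Bp t))" if "t \<le> h" for t
    using that
  proof (induction t)
    case 0
    have "Bp 0 = 0\<^sub>m (h*k) (h*k)" by (rule eq_matI) (auto simp: Bp_def)
    then have "LL (h*k) (Bp 0) = 1\<^sub>m (2*h*k)" using LL_zero[of "h*k"] by (simp add: two_hk)
    then show ?case using lp_in_block[OF in_block_one[OF k, of "2*h"]] by simp
  next
    case (Suc t)
    then have t: "t < h" by simp
    have "LL (h*k) (Bp (Suc t)) = LL (h*k) (Bp t) * LL (h*k) (Shm Pf t) * LL (h*k) (Shm Qf t)"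
      using step[OF t] LL_mult Bpc Shc by (simp add: LL_mult)
    moreover have "layered_product (2*h) k (2*t + 1 + 1) (LL (h*k) (Bp t) * LL (h*k) (Shm Pf t) * LL (h*k) (Shm Qf t))"
      by (intro lp_mult lpP lpQ) (use Suc t in simp)
    ultimately show ?case by simp
  qed
  have "Bp h = B"
  proof (rule eq_matI)
    fix r c assume "r < dim_row B" "c < dim_col B"
    then have "r < h*k" "c < h*k" using B by auto
    then show "Bp h $$ (r,c) = B $$ (r,c)" using h by (simp add: Bp_def)
  qed (use B in \<open>auto simp: Bp_def\<close>)
  then show ?thesis using ind[of h] by simp
qed


lemma base_case:
  assumes k: "k > 0" and X: "X \<in> carrier_mat k k" and d: "det X \<noteq> 0"
  shows "layered_product 1 k 0 X"
proof -
  have "diag_block k 0 X = X"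
    by (rule eq_matI) (use X in \<open>auto simp: diag_block_def\<close>)
  then have "in_block_factor 1 k X"
    unfolding in_block_factor_def using X inv_det[OF X] d by auto
  then show ?thesis by (rule lp_in_block)
qed

lemma LT:
  assumes k: "k > 0"
  shows "X \<in> carrier_mat (2^a*k) (2^a*k) \<Longrightarrow> det X \<noteq> 0 \<Longrightarrow> block_lower_triangular (2^a) k X \<Longrightarrow>
    layered_product (2^a) k (2*(2^a - 1)) X"
proof (induction a arbitrary: X)
  case 0
  then show ?case using base_case[OF k] by simp
next
  case (Suc a)
  define h :: nat where "h = 2^a"
  have h: "h > 0" by (simp add: h_def)
  have e: "2 ^ Suc a * k = h*k + h*k" by (simp add: h_def)
  have X: "X \<in> carrier_mat (h*k + h*k) (h*k + h*k)" using Suc(2) by (simp only: e)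
  define A where "A = mat (h*k) (h*k) (\<lambda>(r,c). X $$ (r,c))"
  define C where "C = mat (h*k) (h*k) (\<lambda>(r,c). X $$ (r + h*k, c))"
  define D where "D = mat (h*k) (h*k) (\<lambda>(r,c). X $$ (r + h*k, c + h*k))"
  have Ac: "A \<in> carrier_mat (h*k) (h*k)" and Cc: "C \<in> carrier_mat (h*k) (h*k)" and Dc: "D \<in> carrier_mat (h*k) (h*k)"
    by (auto simp: A_def C_def D_def)
  have blt: "X $$ (r,c) = 0" if "r < h*k + h*k" "c < h*k + h*k" "r div k < c div k" for r c
    using Suc(4) that unfolding block_lower_triangular_def by (simp add: h_def)
  have XF: "X = four_block_mat A (0\<^sub>m (h*k) (h*k)) C D"
  proof (rule eq_matI)
    fix r c assume "r < dim_row (four_block_mat A (0\<^sub>m (h*k) (h*k)) C D)" "c < dim_col (four_block_mat A (0\<^sub>m (h*k) (h*k)) C D)"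
    then have r: "r < h*k + h*k" and c: "c < h*k + h*k" using Ac Dc by auto
    show "X $$ (r,c) = four_block_mat A (0\<^sub>m (h*k) (h*k)) C D $$ (r,c)"
    proof (cases "r < h*k \<and> \<not> c < h*k")
      case True
      then have "r div k < c div k" using lt_hk[OF k, of r h] lt_hk[OF k, of c h] by auto
      moreover have "c - h*k < h*k" using c by simp
      ultimately show ?thesis using blt r c True Ac Cc Dc by simp
    next
      case False
      then show ?thesis using r c Ac Cc Dc by (auto simp: A_def C_def D_def)
    qed
  qed (use X Ac Dc in auto)
  have "det X = det A * det D"
    unfolding XF by (rule det_four_block_mat_upper_right_zero[OF Ac refl Cc Dc])
  then have dA: "det A \<noteq> 0" and dD: "det D \<noteq> 0" using Suc(3) by auto
  have "block_lower_triangular (2^a) k A"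
    unfolding block_lower_triangular_def
  proof (intro allI impI)
    fix r c assume "r < 2^a*k" "c < 2^a*k" "r div k < c div k"
    then show "A $$ (r,c) = 0" using blt by (auto simp: A_def h_def)
  qed
  then have lpA: "layered_product h k (2*(h-1)) A" using Suc.IH[of A] Ac dA by (simp add: h_def)
  have "block_lower_triangular (2^a) k D"
    unfolding block_lower_triangular_def
  proof (intro allI impI)
    fix r c assume rc: "r < 2^a*k" "c < 2^a*k" "r div k < c div k"
    have "(h*k + r) div k < (h*k + c) div k" using rc(3) k by simp
    then have "X $$ (r + h*k, c + h*k) = 0" using blt[of "r + h*k" "c + h*k"] rc by (simp add: h_def add.commute)
    then show "D $$ (r,c) = 0" using rc by (simp add: D_def h_def)
  qed
  then have lpD: "layered_product h k (2*(h-1)) D" using Suc.IH[of D] Dc dD by (simp add: h_def)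
  have lpAD: "layered_product (2*h) k (2*(h-1)) (diagm (h*k) A D)" by (rule lp_diagm[OF k lpA lpD])
  obtain Di where Di: "Di \<in> carrier_mat (h*k) (h*k)" "D * Di = 1\<^sub>m (h*k)"
    using inv_ex[OF Dc] inv_det[OF Dc] dD by blast
  have lpL: "layered_product (2*h) k (2*h) (LL (h*k) (Di * C))"
    by (rule bipartite[OF k h]) (use Di Cc in auto)
  have "diagm (h*k) A D * LL (h*k) (Di * C) = four_block_mat A (0\<^sub>m (h*k) (h*k)) (D * (Di * C)) D"
    unfolding diagm_def LL_def
    using mult_four_block_mat[OF Ac zero_carrier_mat zero_carrier_mat Dc
        one_carrier_mat zero_carrier_mat mult_carrier_mat[OF Di(1) Cc] one_carrier_mat] Ac Dc Di Cc by simp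
  also have "D * (Di * C) = C" using assoc_mult_mat[OF Dc Di(1) Cc, symmetric] Di Cc by simp
  finally have "X = diagm (h*k) A D * LL (h*k) (Di * C)" using XF by simp
  moreover have "layered_product (2*h) k (2*(h-1) + 2*h) (diagm (h*k) A D * LL (h*k) (Di * C))"
    by (rule lp_mult[OF lpAD lpL])
  moreover have "2*(h-1) + 2*h = 2 * (2 ^ Suc a - 1)" using h by (simp add: h_def)
  moreover have "2 ^ Suc a = 2 * h" by (simp add: h_def)
  ultimately show ?case by simp
qed

lemma layer_transpose: "transpose_mat (layer_matrix N k S) = layer_matrix N k (S\<inverse>)"
  by (rule eq_matI) (auto simp: layer_matrix_def)

lemma disjoint_converse: "disjoint_pairs N S \<Longrightarrow> disjoint_pairs N (S\<inverse>)"
  unfolding disjoint_pairs_def by fast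

lemma transversal_transpose: "transversal_layer N k L \<Longrightarrow> transversal_layer N k (transpose_mat L)"
  unfolding transversal_layer_def using layer_transpose disjoint_converse by metis


lemma bd_transpose:
  assumes "\<And>i. i < N \<Longrightarrow> G i \<in> carrier_mat k k" and k: "k > 0"
  shows "transpose_mat (bd N k G) = bd N k (\<lambda>i. transpose_mat (G i))"
proof (rule eq_matI)
  fix r c assume "r < dim_row (bd N k (\<lambda>i. transpose_mat (G i)))" "c < dim_col (bd N k (\<lambda>i. transpose_mat (G i)))"
  then have r: "r < N*k" and c: "c < N*k" by auto
  have "r mod k < k" "c mod k < k" using k by auto
  then show "transpose_mat (bd N k G) $$ (r, c) = bd N k (\<lambda>i. transpose_mat (G i)) $$ (r, c)"
    using r c assms(1)[OF div_lt[OF r]] by (auto simp: bd_index)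
qed auto

lemma in_block_transpose:
  assumes k: "k > 0" and D: "in_block_factor N k D"
  shows "in_block_factor N k (transpose_mat D)"
proof -
  have "transpose_mat D = bd N k (\<lambda>i. transpose_mat (diag_block k i D))"
    using in_block_bd[OF k D] bd_transpose[OF _ k, of N "\<lambda>i. diag_block k i D"] by simp
  moreover have "in_block_factor N k (bd N k (\<lambda>i. transpose_mat (diag_block k i D)))"
    by (rule bd_in_block[OF k]) (use in_block_props[OF D] in \<open>auto intro: inv_transpose[of _ k]\<close>)
  ultimately show ?thesis by simp
qed

definition trf :: "bool \<times> bit mat \<Rightarrow> bool \<times> bit mat" where
  "trf f = (fst f, transpose_mat (snd f))"

lemma fpr_transpose:
  assumes k: "k > 0"
  shows "okf N k fs \<Longrightarrow> okf N k (rev (map trf fs)) \<and> fpr (N*k) (rev (map trf fs)) = transpose_mat (fpr (N*k) fs)"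
proof (induction fs)
  case Nil
  then show ?case by (simp add: okf_def)
next
  case (Cons f fs)
  have o: "okf N k fs" using Cons(2) by (simp add: okf_def)
  note IH = Cons(1)[OF o]
  have ftr: "okf N k [trf f]" using Cons(2) in_block_transpose[OF k] transversal_transpose
    by (auto simp: okf_def trf_def)
  have fc: "snd f \<in> carrier_mat (N*k) (N*k)" using okf_carrier[OF Cons(2)] by simp
  have "fpr (N*k) (rev (map trf (f # fs))) = fpr (N*k) (rev (map trf fs)) * fpr (N*k) [trf f]"
    using fpr_append[OF conjunct1[OF IH] ftr] by simp
  also have "\<dots> = transpose_mat (fpr (N*k) fs) * transpose_mat (snd f)"
  proof -
    have "fpr (N*k) [trf f] = transpose_mat (snd f)" using fc by (simp add: trf_def)
    then show ?thesis using conjunct2[OF IH] by simp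
  qed
  also have "\<dots> = transpose_mat (snd f * fpr (N*k) fs)"
    by (rule transpose_mult[OF fc fpr_carrier[OF o], symmetric])
  finally show ?case using IH ftr by (auto simp: okf_def)
qed

lemma lp_transpose:
  assumes k: "k > 0" and "layered_product N k m M"
  shows "layered_product N k m (transpose_mat M)"
proof -
  obtain fs where fs: "M = fpr (N*k) fs" "okf N k fs" "length (filter fst fs) \<le> m"
    using assms(2) unfolding lp_def2 by blast
  have "length (filter fst (rev (map trf fs))) = length (filter fst fs)"
    by (induction fs) (auto simp: trf_def)
  then show ?thesis unfolding lp_def2 using fpr_transpose[OF k fs(2)] fs
    by (intro exI[of _ "rev (map trf fs)"]) auto
qed

lemma part2:
  assumes k: "k > 0" and X: "X \<in> carrier_mat (2^a*k) (2^a*k)" and d: "det X \<noteq> 0"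
    and tri: "block_upper_triangular (2^a) k X \<or> block_lower_triangular (2^a) k X"
  shows "layered_product (2^a) k (2*(2^a - 1)) X"
proof (cases "block_lower_triangular (2^a) k X")
  case True
  then show ?thesis using LT[OF k X d] by simp
next
  case False
  then have up: "block_upper_triangular (2^a) k X" using tri by simp
  have Xt: "transpose_mat X \<in> carrier_mat (2^a*k) (2^a*k)" using X by simp
  have dt: "det (transpose_mat X) \<noteq> 0" using det_transpose[OF X] d by simp
  have "block_lower_triangular (2^a) k (transpose_mat X)"
    using up X unfolding block_lower_triangular_def block_upper_triangular_def by auto
  then have "layered_product (2^a) k (2*(2^a - 1)) (transpose_mat X)" using LT[OF k Xt dt] by simp
  then have "layered_product (2^a) k (2*(2^a - 1)) (transpose_mat (transpose_mat X))"
    by (rule lp_transpose[OF k])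
  then show ?thesis by simp
qed


definition pmat :: "nat \<Rightarrow> (nat \<Rightarrow> nat) \<Rightarrow> bit mat" where
  "pmat n \<sigma> = mat n n (\<lambda>(r, c). if \<sigma> r = c then 1 else 0)"

lemma pmat_carrier[simp]: "pmat n \<sigma> \<in> carrier_mat n n" by (simp add: pmat_def)

lemma pmat_mult_left:
  assumes s: "\<sigma> permutes {..<n}" and X: "X \<in> carrier_mat n m" and i: "i < n" and j: "j < m"
  shows "(pmat n \<sigma> * X) $$ (i, j) = X $$ (\<sigma> i, j)"
proof -
  have si: "\<sigma> i < n" using permutes_in_image[OF s] i by simp
  have "(pmat n \<sigma> * X) $$ (i, j) = (\<Sum>s<n. pmat n \<sigma> $$ (i, s) * X $$ (s, j))"
    by (rule mult_index[OF pmat_carrier X i j])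
  also have "\<dots> = (\<Sum>s<n. if s = \<sigma> i then X $$ (\<sigma> i, j) else 0)"
    by (rule sum.cong) (use i in \<open>auto simp: pmat_def\<close>)
  also have "\<dots> = X $$ (\<sigma> i, j)" using si by simp
  finally show ?thesis .
qed

lemma pmat_mult:
  assumes s: "\<sigma> permutes {..<n}" and r: "rh permutes {..<n}"
  shows "pmat n \<sigma> * pmat n rh = pmat n (rh \<circ> \<sigma>)"
proof (rule eq_matI)
  fix i j assume "i < dim_row (pmat n (rh \<circ> \<sigma>))" "j < dim_col (pmat n (rh \<circ> \<sigma>))"
  then have i: "i < n" and j: "j < n" by (auto simp: pmat_def)
  have si: "\<sigma> i < n" using permutes_in_image[OF s] i by simp
  show "(pmat n \<sigma> * pmat n rh) $$ (i, j) = pmat n (rh \<circ> \<sigma>) $$ (i, j)"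
    using pmat_mult_left[OF s pmat_carrier i j] si i j by (simp add: pmat_def)
qed (auto simp: pmat_def)

lemma pmat_id: "pmat n id = 1\<^sub>m n"
  by (rule eq_matI) (auto simp: pmat_def)

lemma pmat_inv:
  assumes s: "\<sigma> permutes {..<n}"
  shows "pmat n \<sigma> * pmat n (Hilbert_Choice.inv \<sigma>) = 1\<^sub>m n"
  using pmat_mult[OF s permutes_inv[OF s]] permutes_inv_o(2)[OF s] pmat_id by simp

lemma shift_perm:
  assumes s: "\<sigma> permutes {..<n}"
  shows "(\<lambda>i. if i = 0 then 0 else Suc (\<sigma> (i - 1))) permutes {..<Suc n}"
proof (rule bij_imp_permutes)
  define f where "f = (\<lambda>i. if i = 0 then 0 else Suc (\<sigma> (i - 1)))"
  define g where "g = (\<lambda>i. if i = 0 then 0 else Suc (Hilbert_Choice.inv \<sigma> (i - 1)))"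
  have iv: "Hilbert_Choice.inv \<sigma> (\<sigma> x) = x" "\<sigma> (Hilbert_Choice.inv \<sigma> x) = x" for x
    using permutes_inverses[OF s] by auto
  have im: "x < n \<Longrightarrow> \<sigma> x < n" "x < n \<Longrightarrow> Hilbert_Choice.inv \<sigma> x < n" for x
    using permutes_in_image[OF s] permutes_in_image[OF permutes_inv[OF s]] by auto
  show "bij_betw (\<lambda>i. if i = 0 then 0 else Suc (\<sigma> (i - 1))) {..<Suc n} {..<Suc n}"
    unfolding f_def[symmetric]
    by (rule bij_betw_byWitness[where f'=g]) (auto simp: f_def g_def iv im)
next
  fix x assume "x \<notin> {..<Suc n}"
  then have "x - 1 \<notin> {..<n}" "x \<noteq> 0" by auto
  then show "(if x = 0 then 0 else Suc (\<sigma> (x - 1))) = x"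
    using permutes_not_in[OF s] by auto
qed

lemma add_minus_cancel_mat:
  assumes "(A :: 'a :: ab_group_add mat) \<in> carrier_mat n m" "B \<in> carrier_mat n m"
  shows "A + (B - A) = B"
  by (rule eq_matI) (use assms in auto)

lemma PLU:
  "(X::bit mat) \<in> carrier_mat n n \<Longrightarrow> det X \<noteq> 0 \<Longrightarrow> \<exists>\<sigma> L U. \<sigma> permutes {..<n} \<and> L \<in> carrier_mat n n \<and> U \<in> carrier_mat n n
     \<and> (\<forall>i<n. \<forall>j<n. i < j \<longrightarrow> L $$ (i,j) = 0) \<and> (\<forall>i<n. \<forall>j<n. j < i \<longrightarrow> U $$ (i,j) = 0)
     \<and> X = pmat n \<sigma> * L * U"
proof (induction n arbitrary: X)
  case 0
  show ?case
    by (intro exI[of _ id] exI[of _ "1\<^sub>m 0"] conjI) (use 0 in \<open>auto intro!: eq_matI simp: pmat_def\<close>)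
next
  case (Suc n)
  have X: "X \<in> carrier_mat (Suc n) (Suc n)" by fact
  obtain p where p: "p < Suc n" "X $$ (p, 0) \<noteq> 0"
  proof (rule ccontr)
    assume "\<not> thesis"
    then have z: "\<And>p. p < Suc n \<Longrightarrow> X $$ (p, 0) = 0" using that by blast
    have "X *\<^sub>v unit_vec (Suc n) 0 = 0\<^sub>v (Suc n)"
    proof (rule eq_vecI)
      fix i assume "i < dim_vec (0\<^sub>v (Suc n) :: bit vec)"
      then have i: "i < Suc n" by simp
      have "(X *\<^sub>v unit_vec (Suc n) 0) $ i = (\<Sum>j<Suc n. X $$ (i, j) * unit_vec (Suc n) 0 $ j)"
        by (rule mult_vec_index[OF X _ i]) simp
      also have "\<dots> = (\<Sum>j<Suc n. if j = 0 then X $$ (i, 0) else 0)"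
        by (rule sum.cong) (auto simp: unit_vec_def)
      also have "\<dots> = 0" using z[OF i] by simp
      finally show "(X *\<^sub>v unit_vec (Suc n) 0) $ i = 0\<^sub>v (Suc n) $ i" using i by simp
    qed (use X in simp)
    moreover have "unit_vec (Suc n) 0 \<noteq> (0\<^sub>v (Suc n) :: bit vec)"
    proof
      assume "unit_vec (Suc n) 0 = (0\<^sub>v (Suc n) :: bit vec)"
      then have "unit_vec (Suc n) 0 $ 0 = (0\<^sub>v (Suc n) :: bit vec) $ 0" by simp
      then show False by simp
    qed
    ultimately have "det X = 0" using det_0_iff_vec_prod_zero_field[OF X] unit_vec_carrier by blast
    then show False using Suc(3) by simp
  qed
  define \<tau> where "\<tau> = Transposition.transpose 0 p"
  have tau: "\<tau> permutes {..<Suc n}" unfolding \<tau>_def by (rule permutes_swap_id) (use p in auto)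
  have tt: "pmat (Suc n) \<tau> * pmat (Suc n) \<tau> = 1\<^sub>m (Suc n)"
    using pmat_mult[OF tau tau] pmat_id unfolding \<tau>_def by (simp add: transpose_comp_involutory)
  define X' where "X' = pmat (Suc n) \<tau> * X"
  have X'c: "X' \<in> carrier_mat (Suc n) (Suc n)" unfolding X'_def by (rule mult_carrier_mat[OF pmat_carrier X])
  have X'i: "X' $$ (i, j) = X $$ (\<tau> i, j)" if "i < Suc n" "j < Suc n" for i j
    unfolding X'_def by (rule pmat_mult_left[OF tau X that])
  have X00: "X' $$ (0, 0) = 1" using X'i[of 0 0] p by (simp add: \<tau>_def)
  have dX': "det X' \<noteq> 0"
  proof -
    have "det (pmat (Suc n) \<tau>) * det (pmat (Suc n) \<tau>) = 1"
      by (simp only: det_mult[OF pmat_carrier pmat_carrier, symmetric] tt det_one)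
    then have "det (pmat (Suc n) \<tau>) \<noteq> 0" by (metis mult_zero_left zero_neq_one)
    then show ?thesis using det_mult[OF pmat_carrier X] Suc(3) by (simp add: X'_def)
  qed
  define u where "u = mat 1 n (\<lambda>(i, j). X' $$ (0, Suc j))"
  define v where "v = mat n 1 (\<lambda>(i, j). X' $$ (Suc i, 0))"
  define Y where "Y = mat n n (\<lambda>(i, j). X' $$ (Suc i, Suc j))"
  have uc: "u \<in> carrier_mat 1 n" and vc: "v \<in> carrier_mat n 1" and Yc: "Y \<in> carrier_mat n n"
    by (auto simp: u_def v_def Y_def)
  have X'F: "X' = four_block_mat (1\<^sub>m 1) u v Y"
  proof (rule eq_matI)
    fix i j assume "i < dim_row (four_block_mat (1\<^sub>m 1) u v Y)" "j < dim_col (four_block_mat (1\<^sub>m 1) u v Y)"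
    then have i: "i < Suc n" and j: "j < Suc n" using uc vc Yc by auto
    show "X' $$ (i, j) = four_block_mat (1\<^sub>m 1) u v Y $$ (i, j)"
      using i j uc vc Yc X00 by (cases i; cases j) (auto simp: u_def v_def Y_def)
  qed (use X'c uc vc Yc in auto)
  define Y' where "Y' = Y - v * u"
  have Y'c: "Y' \<in> carrier_mat n n" unfolding Y'_def by (rule minus_carrier_mat[OF mult_carrier_mat[OF vc uc]])
  have vuY: "v * u + Y' = Y" unfolding Y'_def by (rule add_minus_cancel_mat[OF mult_carrier_mat[OF vc uc] Yc])
  define Lp where "Lp = four_block_mat (1\<^sub>m 1) (0\<^sub>m 1 n) v (1\<^sub>m n)"
  define Up where "Up = four_block_mat (1\<^sub>m 1) u (0\<^sub>m n 1) Y'"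
  have "Lp * Up = four_block_mat (1\<^sub>m 1) u v (v * u + Y')"
    unfolding Lp_def Up_def
    using mult_four_block_mat[OF one_carrier_mat zero_carrier_mat vc one_carrier_mat
      one_carrier_mat uc zero_carrier_mat Y'c] uc vc Y'c by simp
  then have XLU: "X' = Lp * Up" using X'F vuY by simp
  have "det Lp = 1" unfolding Lp_def
    using det_four_block_mat_upper_right_zero[OF one_carrier_mat refl vc one_carrier_mat] by simp
  moreover have "det Up = det Y'" unfolding Up_def
    using det_four_block_mat_lower_left_zero[OF one_carrier_mat uc refl Y'c] by simp
  moreover have "det X' = det Lp * det Up"
  proof -
    have Lpc: "Lp \<in> carrier_mat (1 + n) (1 + n)" unfolding Lp_def using vc by (intro four_block_carrier_mat) auto
    have Upc: "Up \<in> carrier_mat (1 + n) (1 + n)" unfolding Up_def using uc Y'c by (intro four_block_carrier_mat) auto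
    show ?thesis unfolding XLU by (rule det_mult[OF Lpc Upc])
  qed
  ultimately have dY': "det Y' \<noteq> 0" using dX' by simp
  obtain \<sigma>' L' U' where IH: "\<sigma>' permutes {..<n}" "L' \<in> carrier_mat n n" "U' \<in> carrier_mat n n"
     "\<forall>i<n. \<forall>j<n. i < j \<longrightarrow> L' $$ (i,j) = 0" "\<forall>i<n. \<forall>j<n. j < i \<longrightarrow> U' $$ (i,j) = 0"
     "Y' = pmat n \<sigma>' * L' * U'"
    using Suc.IH[OF Y'c dY'] by blast
  define P' where "P' = pmat n \<sigma>'"
  define Pi where "Pi = pmat n (Hilbert_Choice.inv \<sigma>')"
  have P'c: "P' \<in> carrier_mat n n" and Pic: "Pi \<in> carrier_mat n n" by (auto simp: P'_def Pi_def)
  have PPi: "P' * Pi = 1\<^sub>m n" unfolding P'_def Pi_def by (rule pmat_inv[OF IH(1)])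
  define L where "L = four_block_mat (1\<^sub>m 1) (0\<^sub>m 1 n) (Pi * v) L'"
  define U where "U = four_block_mat (1\<^sub>m 1) u (0\<^sub>m n 1) U'"
  define Pd where "Pd = four_block_mat (1\<^sub>m 1) (0\<^sub>m 1 n) (0\<^sub>m n 1) P'"
  have Piv: "Pi * v \<in> carrier_mat n 1" using Pic vc by simp
  have PL: "Pd * L = four_block_mat (1\<^sub>m 1) (0\<^sub>m 1 n) v (P' * L')"
  proof -
    have "Pd * L = four_block_mat (1\<^sub>m 1) (0\<^sub>m 1 n) (P' * (Pi * v)) (P' * L')"
      unfolding Pd_def L_def
      using mult_four_block_mat[OF one_carrier_mat zero_carrier_mat zero_carrier_mat P'c
        one_carrier_mat zero_carrier_mat Piv IH(2)] P'c Piv IH(2) left_mult_zero_mat[OF Piv, of 1]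
        right_add_zero_mat[OF one_carrier_mat[of 1]] by simp
    also have "P' * (Pi * v) = v" using assoc_mult_mat[OF P'c Pic vc, symmetric] PPi vc by simp
    finally show ?thesis .
  qed
  have PLU: "Pd * L * U = X'"
  proof -
    have PL'c: "P' * L' \<in> carrier_mat n n" using P'c IH(2) by simp
    have "Pd * L * U = four_block_mat (1\<^sub>m 1) u v (v * u + P' * L' * U')"
      unfolding PL U_def
      using mult_four_block_mat[OF one_carrier_mat zero_carrier_mat vc PL'c
        one_carrier_mat uc zero_carrier_mat IH(3)] vc uc PL'c IH(3)
        right_mult_zero_mat[OF PL'c, of 1] right_add_zero_mat[OF vc] by simp
    also have "P' * L' * U' = Y'" using IH(6) by (simp add: P'_def)
    finally show ?thesis using X'F vuY by simp
  qed
  define \<sigma>'' where "\<sigma>'' = (\<lambda>i. if i = 0 then 0 else Suc (\<sigma>' (i - 1)))"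
  have s'': "\<sigma>'' permutes {..<Suc n}" unfolding \<sigma>''_def by (rule shift_perm[OF IH(1)])
  have Pdp: "Pd = pmat (Suc n) \<sigma>''"
  proof (rule eq_matI)
    fix i j assume "i < dim_row (pmat (Suc n) \<sigma>'')" "j < dim_col (pmat (Suc n) \<sigma>'')"
    then have i: "i < Suc n" and j: "j < Suc n" by (auto simp: pmat_def)
    show "Pd $$ (i, j) = pmat (Suc n) \<sigma>'' $$ (i, j)"
      using i j P'c by (cases i; cases j) (auto simp: Pd_def pmat_def P'_def \<sigma>''_def)
  qed (auto simp: Pd_def pmat_def P'_def)
  have Lc: "L \<in> carrier_mat (Suc n) (Suc n)" using Piv IH(2) by (auto simp: L_def)
  have Uc: "U \<in> carrier_mat (Suc n) (Suc n)" using uc IH(3) by (auto simp: U_def)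
  have Pdc: "Pd \<in> carrier_mat (Suc n) (Suc n)" using Pdp by simp
  have "X = pmat (Suc n) \<tau> * X'"
    unfolding X'_def using assoc_mult_mat[OF pmat_carrier pmat_carrier X, symmetric] tt X by simp
  also have "\<dots> = pmat (Suc n) \<tau> * (Pd * L * U)" using PLU by simp
  also have "\<dots> = pmat (Suc n) \<tau> * Pd * L * U"
    using assoc_mult_mat[OF pmat_carrier mult_carrier_mat[OF Pdc Lc] Uc, symmetric]
      assoc_mult_mat[OF pmat_carrier Pdc Lc, symmetric] by simp
  also have "pmat (Suc n) \<tau> * Pd = pmat (Suc n) (\<sigma>'' \<circ> \<tau>)" unfolding Pdp by (rule pmat_mult[OF tau s''])
  finally have XX: "X = pmat (Suc n) (\<sigma>'' \<circ> \<tau>) * L * U" .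
  have Ltri: "\<forall>i<Suc n. \<forall>j<Suc n. i < j \<longrightarrow> L $$ (i,j) = 0"
  proof (intro allI impI)
    fix i j assume "i < Suc n" "j < Suc n" "i < j"
    then show "L $$ (i, j) = 0" using IH(4) Piv IH(2) by (cases i; cases j) (auto simp: L_def)
  qed
  have Utri: "\<forall>i<Suc n. \<forall>j<Suc n. j < i \<longrightarrow> U $$ (i,j) = 0"
  proof (intro allI impI)
    fix i j assume "i < Suc n" "j < Suc n" "j < i"
    then show "U $$ (i, j) = 0" using IH(5) uc IH(3) by (cases i; cases j) (auto simp: U_def)
  qed
  show ?case using XX Ltri Utri Lc Uc permutes_compose[OF tau s''] by blast
qed


theorem theorem1:
  fixes k a N :: nat
  assumes "k \<ge> 1" and "a \<ge> 1" and "N = 2 ^ a"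
  shows "(\<forall>X \<in> GL2 (N * k). \<exists>P M. perm_matrix (N * k) P \<and>
              layered_product N k (4 * (N - 1)) M \<and> X = P * M)
       \<and> (\<forall>X \<in> GL2 (N * k).
            block_upper_triangular N k X \<or> block_lower_triangular N k X \<longrightarrow>
            layered_product N k (2 * (N - 1)) X)"
proof -
  have k: "k > 0" using assms(1) by simp
  have p2: "layered_product N k (2 * (N - 1)) X"
    if X: "X \<in> carrier_mat (N*k) (N*k)" and d: "det X \<noteq> 0"
      and tri: "block_upper_triangular N k X \<or> block_lower_triangular N k X" for X
    using part2[OF k, of X a] X d tri assms(3) by simp
  show ?thesis
  proof (intro conjI ballI impI)
    fix X assume "X \<in> GL2 (N * k)"
    then have X: "X \<in> carrier_mat (N*k) (N*k)" and d: "det X \<noteq> 0"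
      unfolding GL2_def using inv_det by auto
    obtain \<sigma> L U where s: "\<sigma> permutes {..<N*k}" and Lc: "L \<in> carrier_mat (N*k) (N*k)"
      and Uc: "U \<in> carrier_mat (N*k) (N*k)"
      and Lt: "\<forall>i<N*k. \<forall>j<N*k. i < j \<longrightarrow> L $$ (i,j) = 0"
      and Ut: "\<forall>i<N*k. \<forall>j<N*k. j < i \<longrightarrow> U $$ (i,j) = 0"
      and e: "X = pmat (N*k) \<sigma> * L * U"
      using PLU[OF X d] by blast
    have "det X = det (pmat (N*k) \<sigma>) * det L * det U"
      unfolding e using det_mult[OF mult_carrier_mat[OF pmat_carrier Lc] Uc] det_mult[OF pmat_carrier Lc] by simp
    then have dL: "det L \<noteq> 0" and dU: "det U \<noteq> 0" using d by auto
    have "block_lower_triangular N k L"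
      unfolding block_lower_triangular_def
    proof (intro allI impI)
      fix r c assume rc: "r < N*k" "c < N*k" "r div k < c div k"
      then have "r < c" using div_le_mono[of c r k] by (cases "r < c") auto
      then show "L $$ (r,c) = 0" using Lt rc by auto
    qed
    then have lpL: "layered_product N k (2 * (N - 1)) L" using p2[OF Lc dL] by simp
    have "block_upper_triangular N k U"
      unfolding block_upper_triangular_def
    proof (intro allI impI)
      fix r c assume rc: "r < N*k" "c < N*k" "c div k < r div k"
      then have "c < r" using div_le_mono[of r c k] by (cases "c < r") auto
      then show "U $$ (r,c) = 0" using Ut rc by auto
    qed
    then have lpU: "layered_product N k (2 * (N - 1)) U" using p2[OF Uc dU] by simp
    have "layered_product N k (2 * (N - 1) + 2 * (N - 1)) (L * U)" by (rule lp_mult[OF lpL lpU])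
    then have lpM: "layered_product N k (4 * (N - 1)) (L * U)" by simp
    have pm: "perm_matrix (N * k) (pmat (N*k) \<sigma>)"
      unfolding perm_matrix_def pmat_def using s by blast
    have "X = pmat (N*k) \<sigma> * (L * U)"
      unfolding e by (rule assoc_mult_mat[OF pmat_carrier Lc Uc])
    then show "\<exists>P M. perm_matrix (N * k) P \<and> layered_product N k (4 * (N - 1)) M \<and> X = P * M"
      using pm lpM by blast
  next
    fix X assume "X \<in> GL2 (N * k)" "block_upper_triangular N k X \<or> block_lower_triangular N k X"
    then show "layered_product N k (2 * (N - 1)) X"
      using p2 inv_det unfolding GL2_def by auto
  qed
qed


end
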